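(* Let $X$ be a toric Fano variety, $Y$ a smooth complete toric variety of the same dimension $n$, and $f\colon X\to Y$ an equivariant birational morphism. Then for every irreducible invariant divisor $E\subset X$ we have $\rho_Y-\rho_{f(E)}\leq 3$. If $f(E)$ is a point $p\in Y$, then $\rho_Y\leq 3$, and $E$ is the only irreducible component of the exceptional divisor of $f$ contracted to $p$, unless $Y\simeq\mathbb{P}^n$; if $Y\simeq\mathbb{P}^n$, there is at most one other component of the exceptional divisor contracted to $p$.
   Context: A toric Fano variety is a smooth projective toric variety with ample anticanonical divisor; $\rho$ denotes the Picard number. Invariant means invariant under the torus action. *)

theory Defs
  imports "HOL-Analysis.Analysis"
begin

text \<open>Combinatorial model of smooth complete toric varieties of dimension n = CARD('n):
  the lattice N = Z^n sits inside real^'n; a smooth fan is encoded as a set of cones,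
  each cone being given by the (finite) set of its primitive ray generators.\<close>

definition lattice_pts :: "(real^'n) set" where
  "lattice_pts = {x. \<forall>i. x $ i \<in> \<int>}"

definition int_span :: "(real^'n) set \<Rightarrow> (real^'n) set" where
  "int_span B = {y. \<exists>c. (\<forall>v\<in>B. c v \<in> \<int>) \<and> y = (\<Sum>v\<in>B. c v *\<^sub>R v)}"

definition lattice_basis :: "(real^'n) set \<Rightarrow> bool" where
  "lattice_basis B \<longleftrightarrow> finite B \<and> independent B \<and> card B = CARD('n) \<and>
     B \<subseteq> lattice_pts \<and> int_span B = lattice_pts"

definition unimodular :: "(real^'n) set \<Rightarrow> bool" where
  "unimodular S \<longleftrightarrow> (\<exists>B. S \<subseteq> B \<and> lattice_basis B)"

definition pos_cone :: "(real^'n) set \<Rightarrow> (real^'n) set" where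
  "pos_cone S = {y. \<exists>c. (\<forall>v\<in>S. c v \<ge> 0) \<and> y = (\<Sum>v\<in>S. c v *\<^sub>R v)}"

definition smooth_fan :: "(real^'n) set set \<Rightarrow> bool" where
  "smooth_fan \<Sigma> \<longleftrightarrow> finite \<Sigma> \<and> \<Sigma> \<noteq> {} \<and>
     (\<forall>S\<in>\<Sigma>. unimodular S) \<and>
     (\<forall>S\<in>\<Sigma>. \<forall>T. T \<subseteq> S \<longrightarrow> T \<in> \<Sigma>) \<and>
     (\<forall>S\<in>\<Sigma>. \<forall>T\<in>\<Sigma>. pos_cone S \<inter> pos_cone T = pos_cone (S \<inter> T))"

definition smooth_complete_fan :: "(real^'n) set set \<Rightarrow> bool" where
  "smooth_complete_fan \<Sigma> \<longleftrightarrow> smooth_fan \<Sigma> \<and> (\<Union>S\<in>\<Sigma>. pos_cone S) = UNIV"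

text \<open>Rays (= irreducible invariant divisors), given by primitive generators.\<close>
definition rays :: "(real^'n) set set \<Rightarrow> (real^'n) set" where
  "rays \<Sigma> = {v. {v} \<in> \<Sigma>}"

text \<open>Ampleness of the anticanonical divisor -K = sum of all D_rho (toric criterion:
  the support function with value 1 on all ray generators is strictly convex):
  for every maximal cone S the linear form m with m(v) = 1 on the generators of S
  takes values < 1 on all other ray generators.\<close>
definition toric_fano :: "(real^'n) set set \<Rightarrow> bool" where
  "toric_fano \<Sigma> \<longleftrightarrow> smooth_complete_fan \<Sigma> \<and>
     (\<forall>S\<in>\<Sigma>. card S = CARD('n) \<longrightarrow>
        (\<exists>m::real^'n. (\<forall>v\<in>S. m \<bullet> v = 1) \<and> (\<forall>u\<in>rays \<Sigma> - S. m \<bullet> u < 1)))"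

definition picard_number :: "(real^'n) set set \<Rightarrow> int" where
  "picard_number \<Sigma> = int (card (rays \<Sigma>)) - int CARD('n)"

text \<open>Picard number of the orbit closure V(tau), a smooth complete toric variety of
  dimension n - dim tau whose fan Star(tau) has one ray for each cone of dimension
  dim tau + 1 containing tau.\<close>
definition orbit_picard_number :: "(real^'n) set set \<Rightarrow> (real^'n) set \<Rightarrow> int" where
  "orbit_picard_number \<Sigma> \<tau> =
     int (card {v \<in> rays \<Sigma>. v \<notin> \<tau> \<and> insert v \<tau> \<in> \<Sigma>}) - (int CARD('n) - int (card \<tau>))"

text \<open>Equivariant birational morphism X -> Y (after identifying the lattices):
  the fan of X refines the fan of Y.\<close>
definition refines :: "(real^'n) set set \<Rightarrow> (real^'n) set set \<Rightarrow> bool" where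
  "refines \<Sigma>X \<Sigma>Y \<longleftrightarrow> (\<forall>S\<in>\<Sigma>X. \<exists>T\<in>\<Sigma>Y. pos_cone S \<subseteq> pos_cone T)"

text \<open>tau is the smallest cone of the fan of Y containing the ray generated by e;
  then f(D_e) = V(tau).\<close>
definition image_cone :: "(real^'n) set set \<Rightarrow> real^'n \<Rightarrow> (real^'n) set \<Rightarrow> bool" where
  "image_cone \<Sigma>Y e \<tau> \<longleftrightarrow> \<tau> \<in> \<Sigma>Y \<and> e \<in> pos_cone \<tau> \<and>
     (\<forall>\<tau>'\<in>\<Sigma>Y. e \<in> pos_cone \<tau>' \<longrightarrow> \<tau> \<subseteq> \<tau>')"

text \<open>Irreducible components of the exceptional divisor of f mapped onto V(tau).\<close>
definition exceptional_over ::
  "(real^'n) set set \<Rightarrow> (real^'n) set set \<Rightarrow> (real^'n) set \<Rightarrow> (real^'n) set" where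
  "exceptional_over \<Sigma>X \<Sigma>Y \<tau> = {e \<in> rays \<Sigma>X. e \<notin> rays \<Sigma>Y \<and> image_cone \<Sigma>Y e \<tau>}"

definition is_Pn_fan :: "(real^'n) set set \<Rightarrow> bool" where
  "is_Pn_fan \<Sigma> \<longleftrightarrow> (\<exists>B. lattice_basis B \<and>
     \<Sigma> = {S. S \<subseteq> insert (- (\<Sum>B)) B \<and> S \<noteq> insert (- (\<Sum>B)) B})"

end

theory Submission
  imports Defs
begin

lemma coord_unique:
  fixes B :: "(real^'n) set"
  assumes "finite B" "independent B" "(\<Sum>b\<in>B. c b *\<^sub>R b) = (\<Sum>b\<in>B. d b *\<^sub>R b)" "b \<in> B"
  shows "c b = d b"
proof -
  have "(\<Sum>b\<in>B. (c b - d b) *\<^sub>R b) = 0"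
    using assms(3) by (simp add: scaleR_diff_left sum_subtractf)
  moreover have "\<not> dependent B" using assms(2) by simp
  then have "\<forall>u. (\<forall>v\<in>B. u v = 0) \<or> (\<Sum>v\<in>B. u v *\<^sub>R v) \<noteq> 0"
    unfolding dependent_finite[OF assms(1)] by blast
  from spec[OF this, of "\<lambda>b. c b - d b"] have "\<forall>v\<in>B. c v - d v = 0"
    using \<open>(\<Sum>b\<in>B. (c b - d b) *\<^sub>R b) = 0\<close> by blast
  with assms(4) show ?thesis by auto
qed

lemma unimodular_props:
  assumes "unimodular (S::(real^'n) set)"
  shows "finite S" "independent S" "card S \<le> CARD('n)" "S \<subseteq> lattice_pts"
proof -
  obtain B where B: "S \<subseteq> B" "lattice_basis B" using assms unimodular_def by blast
  then show "finite S" "S \<subseteq> lattice_pts"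
    unfolding lattice_basis_def by (auto intro: finite_subset)
  have "card S \<le> card B" using B card_mono[OF _ B(1)] unfolding lattice_basis_def by blast
  moreover have "card B = CARD('n)" using B unfolding lattice_basis_def by simp
  ultimately show "card S \<le> CARD('n)" by simp
  show "independent S" using B unfolding lattice_basis_def
    by (meson independent_mono)
qed

lemma unimodular_card_basis:
  assumes "unimodular (S::(real^'n) set)" "card S = CARD('n)"
  shows "lattice_basis S"
proof -
  obtain B where B: "S \<subseteq> B" "lattice_basis B" using assms unimodular_def by blast
  then have "S = B" using assms(2) unfolding lattice_basis_def
    by (metis card_subset_eq)
  with B show ?thesis by simp
qed

lemma lattice_coords:
  assumes "lattice_basis B" "p \<in> lattice_pts"
  obtains \<beta> where "\<forall>b\<in>B. \<beta> b \<in> \<int>" "p = (\<Sum>b\<in>B. \<beta> b *\<^sub>R b)"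
  using assms unfolding lattice_basis_def int_span_def by blast

lemma lattice_coords_int:
  assumes "lattice_basis B" "p \<in> lattice_pts" "p = (\<Sum>b\<in>B. c b *\<^sub>R b)" "b \<in> B"
  shows "c b \<in> \<int>"
proof -
  obtain \<beta> where \<beta>: "\<forall>b\<in>B. \<beta> b \<in> \<int>" "p = (\<Sum>b\<in>B. \<beta> b *\<^sub>R b)"
    using lattice_coords[OF assms(1,2)] by blast
  have fi: "finite B" "independent B" using assms(1) unfolding lattice_basis_def by auto
  have "c b = \<beta> b" by (rule coord_unique[OF fi _ assms(4)]) (use assms(3) \<beta>(2) in simp)
  then show ?thesis using \<beta>(1) assms(4) by simp
qed

lemma lattice_add: "p \<in> lattice_pts \<Longrightarrow> q \<in> lattice_pts \<Longrightarrow> p + q \<in> lattice_pts"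
  unfolding lattice_pts_def by auto
lemma lattice_diff: "p \<in> lattice_pts \<Longrightarrow> q \<in> lattice_pts \<Longrightarrow> p - q \<in> lattice_pts"
  unfolding lattice_pts_def by auto
lemma lattice_uminus: "p \<in> lattice_pts \<Longrightarrow> - p \<in> lattice_pts"
  unfolding lattice_pts_def by auto
lemma lattice_zero: "0 \<in> lattice_pts"
  unfolding lattice_pts_def by auto

lemma basis_multiple_int:
  assumes "lattice_basis B" "r \<in> B" "p \<in> lattice_pts" "p = d *\<^sub>R r"
  shows "d \<in> \<int>"
proof -
  have fin: "finite B" using assms(1) lattice_basis_def by blast
  have "(\<Sum>b\<in>B. (if b = r then d else 0) *\<^sub>R b) = (\<Sum>b\<in>B. (if b = r then d *\<^sub>R b else 0))"
    by (rule sum.cong) auto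
  also have "\<dots> = d *\<^sub>R r" using assms(2) fin by simp
  finally have "p = (\<Sum>b\<in>B. (if b = r then d else 0) *\<^sub>R b)" using assms(4) by simp
  from lattice_coords_int[OF assms(1,3) this assms(2)] show ?thesis by simp
qed

lemma pos_cone_mem:
  assumes "finite S" "v \<in> S" shows "v \<in> pos_cone S"
proof -
  have "(\<Sum>x\<in>S. (if x = v then 1 else 0) *\<^sub>R x) = (\<Sum>x\<in>S. (if x = v then x else 0))"
    by (rule sum.cong) auto
  also have "\<dots> = v" using assms by simp
  finally have "v = (\<Sum>x\<in>S. (if x = v then 1 else 0) *\<^sub>R x)" by simp
  then show ?thesis unfolding pos_cone_def mem_Collect_eq
    by (intro exI[of _ "\<lambda>x. if x = v then 1 else 0"]) auto
qed

lemma half_not_int: "(1/2::real) \<notin> \<int>"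
proof
  assume "(1/2::real) \<in> \<int>"
  then obtain k where k: "(1/2::real) = real_of_int k" by (auto elim: Ints_cases)
  then have "real_of_int (2*k) = 1" by simp
  then have "2*k = 1" by linarith
  then show False by presburger
qed

lemma pos_cone_empty: "pos_cone {} = {0}"
  unfolding pos_cone_def by auto

lemma pos_cone_span: "pos_cone S \<subseteq> span S"
proof
  fix y assume "y \<in> pos_cone S"
  then obtain c where "y = (\<Sum>v\<in>S. c v *\<^sub>R v)" unfolding pos_cone_def by blast
  then show "y \<in> span S" by (simp add: span_sum span_scale span_base)
qed

lemma pos_cone_antisym:
  assumes "finite T" "independent T" "p \<in> pos_cone T" "- p \<in> pos_cone T"
  shows "p = 0"
proof -
  obtain c where c: "\<forall>v\<in>T. c v \<ge> 0" "p = (\<Sum>v\<in>T. c v *\<^sub>R v)" using assms(3) pos_cone_def by blast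
  obtain d where d: "\<forall>v\<in>T. d v \<ge> 0" "- p = (\<Sum>v\<in>T. d v *\<^sub>R v)" using assms(4) pos_cone_def by blast
  have "(\<Sum>v\<in>T. c v *\<^sub>R v) + (\<Sum>v\<in>T. d v *\<^sub>R v) = 0"
    using c(2) d(2) by (metis add.right_inverse)
  then have "(\<Sum>v\<in>T. (c v + d v) *\<^sub>R v) = (\<Sum>v\<in>T. 0 *\<^sub>R v)"
    by (simp add: scaleR_add_left sum.distrib)
  then have "\<forall>v\<in>T. c v + d v = 0" using coord_unique[OF assms(1,2), of "\<lambda>v. c v + d v" "\<lambda>v. 0"] by simp
  then have "\<forall>v\<in>T. c v = 0" using c(1) d(1) by (metis add_nonneg_eq_0_iff)
  then show ?thesis using c(2) by simp
qed

lemma indep_not_in_span: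
  assumes "independent T" "a \<in> T" "a \<in> span (T - {a})" shows False
  using assms dependent_def by blast

lemma smooth_fan_props:
  assumes "smooth_fan \<Sigma>"
  shows "finite \<Sigma>" "\<And>S. S \<in> \<Sigma> \<Longrightarrow> unimodular S"
    "\<And>S T. S \<in> \<Sigma> \<Longrightarrow> T \<subseteq> S \<Longrightarrow> T \<in> \<Sigma>"
    "\<And>S T. S \<in> \<Sigma> \<Longrightarrow> T \<in> \<Sigma> \<Longrightarrow> pos_cone S \<inter> pos_cone T = pos_cone (S \<inter> T)"
proof -
  show "finite \<Sigma>" using assms unfolding smooth_fan_def Ball_def by blast
  show "\<And>S. S \<in> \<Sigma> \<Longrightarrow> unimodular S" using assms unfolding smooth_fan_def Ball_def by blast
  show "\<And>S T. S \<in> \<Sigma> \<Longrightarrow> T \<subseteq> S \<Longrightarrow> T \<in> \<Sigma>" using assms unfolding smooth_fan_def Ball_def by blast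
  show "\<And>S T. S \<in> \<Sigma> \<Longrightarrow> T \<in> \<Sigma> \<Longrightarrow> pos_cone S \<inter> pos_cone T = pos_cone (S \<inter> T)"
    using assms unfolding smooth_fan_def Ball_def by blast
qed

lemma cone_elem_ray:
  assumes "smooth_fan \<Sigma>" "S \<in> \<Sigma>" "v \<in> S" shows "v \<in> rays \<Sigma>"
  using smooth_fan_props(3)[OF assms(1,2), of "{v}"] assms(3) unfolding rays_def by auto

lemma ray_basis:
  assumes "smooth_fan \<Sigma>" "v \<in> rays \<Sigma>"
  obtains B where "v \<in> B" "lattice_basis B"
  using smooth_fan_props(2)[OF assms(1)] assms(2) unfolding rays_def unimodular_def by blast

lemma ray_lattice:
  assumes "smooth_fan \<Sigma>" "v \<in> rays \<Sigma>" shows "v \<in> lattice_pts" "v \<noteq> 0"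
proof -
  obtain B where B: "v \<in> B" "lattice_basis B" using ray_basis[OF assms] by blast
  then show "v \<in> lattice_pts" unfolding lattice_basis_def by auto
  from B have "independent B" unfolding lattice_basis_def by auto
  then show "v \<noteq> 0" using B(1) dependent_zero by blast
qed

lemma ray_not_double:
  assumes "smooth_fan \<Sigma>" "v \<in> rays \<Sigma>" "p \<in> lattice_pts" shows "v \<noteq> 2 *\<^sub>R p"
proof
  assume v: "v = 2 *\<^sub>R p"
  obtain B where B: "v \<in> B" "lattice_basis B" using ray_basis[OF assms(1,2)] by blast
  have "p = (1/2) *\<^sub>R v" using v by simp
  from basis_multiple_int[OF B(2,1) assms(3) this] show False
    using half_not_int by blast
qed

lemma ray_in_cone:
  assumes "smooth_fan \<Sigma>" "w \<in> rays \<Sigma>" "T \<in> \<Sigma>" "w \<in> pos_cone T" shows "w \<in> T"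
proof (rule ccontr)
  assume "w \<notin> T"
  have "{w} \<in> \<Sigma>" using assms(2) rays_def by auto
  from smooth_fan_props(4)[OF assms(1) this assms(3)] \<open>w \<notin> T\<close>
  have "pos_cone {w} \<inter> pos_cone T = {0}" by (simp add: pos_cone_empty)
  moreover have "w \<in> pos_cone {w}" by (rule pos_cone_mem) auto
  ultimately show False using assms(4) ray_lattice(2)[OF assms(1,2)] by blast
qed

lemma rays_finite:
  assumes "smooth_fan \<Sigma>" shows "finite (rays \<Sigma>)"
proof -
  have "rays \<Sigma> \<subseteq> \<Union>\<Sigma>" unfolding rays_def by auto
  moreover have "finite (\<Union>\<Sigma>)" using smooth_fan_props(1,2)[OF assms] unimodular_props(1) by blast
  ultimately show ?thesis by (rule finite_subset)
qed

lemma adj_not_half: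
  assumes "smooth_fan \<Sigma>" "S \<in> \<Sigma>" "y1 \<in> S" "y2 \<in> S" "y1 \<noteq> y2" "p \<in> lattice_pts"
  shows "y1 + y2 \<noteq> 2 *\<^sub>R p"
proof
  assume h: "y1 + y2 = 2 *\<^sub>R p"
  obtain B where B: "S \<subseteq> B" "lattice_basis B"
    using smooth_fan_props(2)[OF assms(1,2)] unimodular_def by blast
  have fin: "finite B" using B lattice_basis_def by blast
  define c where "c = (\<lambda>b::real^'a. if b = y1 \<or> b = y2 then (1/2::real) else 0)"
  have "(\<Sum>b\<in>B. c b *\<^sub>R b) = (\<Sum>b\<in>B. (if b = y1 then (1/2) *\<^sub>R b else 0) + (if b = y2 then (1/2) *\<^sub>R b else 0))"
    by (rule sum.cong) (auto simp: c_def assms(5))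
  also have "\<dots> = (1/2) *\<^sub>R y1 + (1/2) *\<^sub>R y2"
    using fin B(1) assms(3,4) by (simp add: sum.distrib subset_iff)
  also have "\<dots> = (1/2) *\<^sub>R (y1 + y2)" by (simp add: scaleR_right_distrib)
  also have "\<dots> = p" using h by simp
  finally have "p = (\<Sum>b\<in>B. c b *\<^sub>R b)" by simp
  from lattice_coords_int[OF B(2) assms(6) this] B(1) assms(3) have "c y1 \<in> \<int>" by blast
  then show False unfolding c_def using half_not_int by simp
qed

lemma card_lt_span_ne:
  fixes T :: "(real^'n) set"
  assumes "independent T" "card T < CARD('n)"
  obtains u where "u \<notin> span T"
proof -
  have "span T \<noteq> UNIV"
  proof
    assume "span T = UNIV"
    then have "dim (UNIV::(real^'n) set) = card T" using dim_span_eq_card_independent[OF assms(1)] by simp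
    then show False using assms(2) by simp
  qed
  then show ?thesis using that by blast
qed

lemma small_param:
  fixes a b :: real
  assumes "a < 0" "infinite K"
  obtains k where "k \<in> K" "a + (1 / (real k + 1)) * b < 0"
proof -
  define N where "N = nat \<lceil>\<bar>b\<bar> / (- a)\<rceil>"
  obtain k where k: "k \<in> K" "k > N" using assms(2) infinite_nat_iff_unbounded by blast
  have "\<bar>b\<bar> / (- a) \<le> real N" unfolding N_def by linarith
  moreover have "- a > 0" using assms(1) by simp
  ultimately have "\<bar>b\<bar> \<le> real N * (- a)" by (metis pos_divide_le_eq)
  also have "\<dots> < (real k + 1) * (- a)" using k(2) assms(1)
    by (intro mult_strict_right_mono) auto
  finally have "\<bar>b\<bar> / (real k + 1) < - a" by (simp add: divide_less_eq mult.commute)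
  moreover have "(1 / (real k + 1)) * b \<le> \<bar>b\<bar> / (real k + 1)" by (simp add: divide_right_mono)
  ultimately have "a + (1 / (real k + 1)) * b < 0" by linarith
  with k(1) that show ?thesis by blast
qed

lemma complete_cover:
  assumes "smooth_complete_fan \<Sigma>" shows "\<exists>C\<in>\<Sigma>. p \<in> pos_cone C"
proof -
  have cv: "(\<Union>S\<in>\<Sigma>. pos_cone S) = UNIV" using assms unfolding smooth_complete_fan_def by blast
  have "p \<in> (\<Union>S\<in>\<Sigma>. pos_cone S)" unfolding cv by (rule UNIV_I)
  then show ?thesis by blast
qed

lemma complete_fan_max_cone:
  fixes \<Sigma> :: "(real^'n) set set"
  assumes "smooth_complete_fan \<Sigma>" "S \<in> \<Sigma>"
  obtains T where "T \<in> \<Sigma>" "S \<subseteq> T" "card T = CARD('n)"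
proof -
  have sf: "smooth_fan \<Sigma>" using assms(1) unfolding smooth_complete_fan_def by blast
  have cov: "\<exists>C\<in>\<Sigma>. p \<in> pos_cone C" for p using complete_cover[OF assms(1)] .
  obtain T where T: "T \<in> \<Sigma>" "S \<le> T" "\<forall>b\<in>\<Sigma>. T \<le> b \<longrightarrow> T = b"
    using finite_has_maximal2[OF smooth_fan_props(1)[OF sf] assms(2)] by (elim bexE conjE) 
  have TS: "T \<in> \<Sigma>" "S \<subseteq> T" using T(1,2) by auto
  have Tmax: "\<And>C. C \<in> \<Sigma> \<Longrightarrow> T \<subseteq> C \<Longrightarrow> C = T" using T(3) by auto
  have um: "unimodular T" using smooth_fan_props(2)[OF sf TS(1)] .
  note Tp = unimodular_props[OF um]
  have "card T = CARD('n)"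
  proof (rule ccontr)
    assume "card T \<noteq> CARD('n)"
    then have "card T < CARD('n)" using Tp(3) by simp
    then obtain u where u: "u \<notin> span T" using card_lt_span_ne[OF Tp(2)] by blast
    define q where "q = (\<Sum>t\<in>T. t)"
    define P where "P = (\<lambda>k::nat. q + (1 / (real k + 1)) *\<^sub>R u)"
    have "\<forall>k. \<exists>C. C \<in> \<Sigma> \<and> P k \<in> pos_cone C" using cov by blast
    then obtain Cf where Cf: "\<And>k. Cf k \<in> \<Sigma> \<and> P k \<in> pos_cone (Cf k)"
      using choice[of "\<lambda>k C. C \<in> \<Sigma> \<and> P k \<in> pos_cone C"] by blast
    have "range Cf \<subseteq> \<Sigma>" using Cf by blast
    then have "finite (range Cf)" using smooth_fan_props(1)[OF sf] by (rule finite_subset)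
    then obtain C where C: "C \<in> range Cf" "infinite (Cf -` {C})"
      using inf_img_fin_domE[of Cf UNIV] by blast
    define K where "K = Cf -` {C}"
    have CS: "C \<in> \<Sigma>" using C(1) Cf by auto
    have PK: "\<And>k. k \<in> K \<Longrightarrow> P k \<in> pos_cone C" using Cf unfolding K_def by auto
    have infK: "infinite K" using C(2) K_def by simp
    note Cp = unimodular_props[OF smooth_fan_props(2)[OF sf CS]]
    obtain k1 where k1: "k1 \<in> K" using infK infinite_imp_nonempty by blast
    have "infinite (K - {k1})" using infK by simp
    then obtain k2 where k2: "k2 \<in> K - {k1}" using infinite_imp_nonempty by blast
    have neq: "k1 \<noteq> k2" using k2 by auto
    define t1 where "t1 = 1 / (real k1 + 1)"
    define t2 where "t2 = 1 / (real k2 + 1)"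
    have "t1 \<noteq> t2"
    proof
      assume "t1 = t2"
      then have "real k1 + 1 = real k2 + 1" unfolding t1_def t2_def by (simp add: field_simps)
      then show False using neq by simp
    qed
    have s1: "P k1 \<in> span C" "P k2 \<in> span C" using PK k1 k2 pos_cone_span by auto
    have "P k1 - P k2 = (t1 - t2) *\<^sub>R u" unfolding P_def t1_def t2_def by (simp add: scaleR_diff_left)
    then have "u = (1 / (t1 - t2)) *\<^sub>R (P k1 - P k2)" using \<open>t1 \<noteq> t2\<close> by simp
    then have uC: "u \<in> span C" using s1 by (simp add: span_diff span_scale)
    have "q = P k1 - t1 *\<^sub>R u" unfolding P_def t1_def by simp
    then have qC: "q \<in> span C" using s1 uC by (simp add: span_diff span_scale)
    obtain \<alpha> where \<alpha>: "q = (\<Sum>c\<in>C. \<alpha> c *\<^sub>R c)" using qC span_finite[OF Cp(1)] by auto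
    obtain \<beta> where \<beta>: "u = (\<Sum>c\<in>C. \<beta> c *\<^sub>R c)" using uC span_finite[OF Cp(1)] by auto
    have Pk: "P k = (\<Sum>c\<in>C. (\<alpha> c + (1 / (real k + 1)) * \<beta> c) *\<^sub>R c)" for k
      unfolding P_def \<alpha> \<beta> by (simp add: scaleR_add_left sum.distrib scaleR_sum_right)
    have nonneg: "\<alpha> c + (1 / (real k + 1)) * \<beta> c \<ge> 0" if kK: "k \<in> K" and cC: "c \<in> C" for k c
    proof -
      obtain \<gamma> where \<gamma>: "\<forall>v\<in>C. \<gamma> v \<ge> 0" "P k = (\<Sum>v\<in>C. \<gamma> v *\<^sub>R v)"
        using PK[OF kK] unfolding pos_cone_def by blast
      have e: "(\<Sum>c\<in>C. (\<alpha> c + (1 / (real k + 1)) * \<beta> c) *\<^sub>R c) = (\<Sum>v\<in>C. \<gamma> v *\<^sub>R v)"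
        using Pk[of k] \<gamma>(2) by simp
      have "\<alpha> c + (1 / (real k + 1)) * \<beta> c = \<gamma> c"
        by (rule coord_unique[OF Cp(1,2) e cC])
      then show ?thesis using \<gamma>(1) cC by simp
    qed
    have anonneg: "\<forall>c\<in>C. \<alpha> c \<ge> 0"
    proof
      fix c assume c: "c \<in> C"
      show "\<alpha> c \<ge> 0"
      proof (rule ccontr)
        assume "\<not> \<alpha> c \<ge> 0"
        then have "\<alpha> c < 0" by simp
        then obtain k where "k \<in> K" "\<alpha> c + (1 / (real k + 1)) * \<beta> c < 0"
          using small_param[of "\<alpha> c" K "\<beta> c"] infK by blast
        with nonneg[OF _ c] show False by fastforce
      qed
    qed
    have qCc: "q \<in> pos_cone C" unfolding pos_cone_def using \<alpha> anonneg by blast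
    have qT: "q \<in> pos_cone T" unfolding pos_cone_def q_def
      by (intro CollectI exI[of _ "\<lambda>_. 1"]) auto
    have "q \<in> pos_cone (T \<inter> C)" using smooth_fan_props(4)[OF sf TS(1) CS] qCc qT by blast
    then obtain \<delta> where \<delta>: "q = (\<Sum>x\<in>T \<inter> C. \<delta> x *\<^sub>R x)" unfolding pos_cone_def by blast
    have "(\<Sum>x\<in>T \<inter> C. \<delta> x *\<^sub>R x) = (\<Sum>x\<in>T. (if x \<in> C then \<delta> x else 0) *\<^sub>R x)"
    proof -
      have "(\<Sum>x\<in>T. (if x \<in> C then \<delta> x else 0) *\<^sub>R x) = (\<Sum>x\<in>T. (if x \<in> C then \<delta> x *\<^sub>R x else 0))"
        by (rule sum.cong) auto
      also have "\<dots> = (\<Sum>x\<in>T \<inter> C. \<delta> x *\<^sub>R x)" using Tp(1) by (simp add: sum.inter_restrict)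
      finally show ?thesis by simp
    qed
    moreover have "q = (\<Sum>x\<in>T. 1 *\<^sub>R x)" unfolding q_def by simp
    ultimately have eq: "(\<Sum>x\<in>T. (if x \<in> C then \<delta> x else 0) *\<^sub>R x) = (\<Sum>x\<in>T. 1 *\<^sub>R x)" using \<delta> by simp
    have "T \<subseteq> C"
    proof
      fix x assume x: "x \<in> T"
      from coord_unique[OF Tp(1,2) eq x] show "x \<in> C" by (cases "x \<in> C") auto
    qed
    then have "C = T" using Tmax[OF CS] by blast
    then show False using u uC by simp
  qed
  then show ?thesis using that TS by blast
qed

lemma complete_fan_point_max_cone:
  fixes \<Sigma> :: "(real^'n) set set"
  assumes "smooth_complete_fan \<Sigma>"
  obtains T where "T \<in> \<Sigma>" "p \<in> pos_cone T" "card T = CARD('n)"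
proof -
  obtain S where S: "S \<in> \<Sigma>" "p \<in> pos_cone S" using complete_cover[OF assms] by blast
  obtain T where T: "T \<in> \<Sigma>" "S \<subseteq> T" "card T = CARD('n)" using complete_fan_max_cone[OF assms S(1)] by blast
  have "pos_cone S \<subseteq> pos_cone T"
  proof
    fix y assume "y \<in> pos_cone S"
    then obtain c where c: "\<forall>v\<in>S. c v \<ge> 0" "y = (\<Sum>v\<in>S. c v *\<^sub>R v)" unfolding pos_cone_def by blast
    have "card T > 0" using T(3) by simp
    then have fT: "finite T" using card_gt_0_iff by blast
    have "y = (\<Sum>v\<in>T. (if v \<in> S then c v else 0) *\<^sub>R v)"
    proof -
      have "(\<Sum>v\<in>T. (if v \<in> S then c v else 0) *\<^sub>R v) = (\<Sum>v\<in>T. (if v \<in> S then c v *\<^sub>R v else 0))"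
        by (rule sum.cong) auto
      also have "\<dots> = (\<Sum>v\<in>T \<inter> S. c v *\<^sub>R v)" using fT by (simp add: sum.inter_restrict)
      also have "T \<inter> S = S" using T(2) by auto
      finally show ?thesis using c(2) by simp
    qed
    moreover have "\<forall>v\<in>T. (if v \<in> S then c v else 0) \<ge> 0" using c(1) by simp
    ultimately show "y \<in> pos_cone T" unfolding pos_cone_def mem_Collect_eq
      by (intro exI[of _ "\<lambda>v. if v \<in> S then c v else 0"]) simp
  qed
  then show ?thesis using that T S by blast
qed

definition adj :: "(real^'n) set set \<Rightarrow> real^'n \<Rightarrow> real^'n \<Rightarrow> bool" where
  "adj \<Sigma> a b \<longleftrightarrow> (\<exists>S\<in>\<Sigma>. a \<in> S \<and> b \<in> S)"

definition nonadj :: "(real^'n) set set \<Rightarrow> real^'n \<Rightarrow> (real^'n) set" where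
  "nonadj \<Sigma> x = {y \<in> rays \<Sigma>. \<not> adj \<Sigma> x y}"

definition maxm :: "(real^'n) set set \<Rightarrow> (real^'n) set \<Rightarrow> real^'n \<Rightarrow> bool" where
  "maxm \<Sigma> T m \<longleftrightarrow> T \<in> \<Sigma> \<and> card T = CARD('n) \<and> (\<forall>v\<in>T. m \<bullet> v = 1) \<and> (\<forall>u\<in>rays \<Sigma> - T. m \<bullet> u < 1)"

lemma int_lt1: "(x::real) \<in> \<int> \<Longrightarrow> x < 1 \<Longrightarrow> x \<le> 0"
  by (auto elim!: Ints_cases)

lemma int_lt2: "(x::real) \<in> \<int> \<Longrightarrow> x < 2 \<Longrightarrow> x \<le> 1"
  by (auto elim!: Ints_cases)

lemma int_gt0: "(x::real) \<in> \<int> \<Longrightarrow> x > 0 \<Longrightarrow> x \<ge> 1"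
  by (auto elim!: Ints_cases)

lemma fano_sf: "toric_fano \<Sigma> \<Longrightarrow> smooth_fan \<Sigma>"
  unfolding toric_fano_def smooth_complete_fan_def by blast

lemma fano_scf: "toric_fano \<Sigma> \<Longrightarrow> smooth_complete_fan \<Sigma>"
  unfolding toric_fano_def by blast

lemma maxm_of_cone:
  fixes \<Sigma> :: "(real^'n) set set"
  assumes "toric_fano \<Sigma>" "T \<in> \<Sigma>" "card T = CARD('n)"
  obtains m where "maxm \<Sigma> T m"
  using assms unfolding toric_fano_def maxm_def by blast

lemma maxm_point:
  fixes \<Sigma> :: "(real^'n) set set"
  assumes "toric_fano \<Sigma>"
  obtains T m where "maxm \<Sigma> T m" "p \<in> pos_cone T"
proof -
  obtain T where T: "T \<in> \<Sigma>" "p \<in> pos_cone T" "card T = CARD('n)"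
    using complete_fan_point_max_cone[OF fano_scf[OF assms]] by blast
  then show ?thesis using maxm_of_cone[OF assms T(1,3)] that by blast
qed

lemma maxm_cone:
  fixes \<Sigma> :: "(real^'n) set set"
  assumes "toric_fano \<Sigma>" "S \<in> \<Sigma>"
  obtains T m where "maxm \<Sigma> T m" "S \<subseteq> T"
proof -
  obtain T where T: "T \<in> \<Sigma>" "S \<subseteq> T" "card T = CARD('n)"
    using complete_fan_max_cone[OF fano_scf[OF assms(1)] assms(2)] by blast
  then show ?thesis using maxm_of_cone[OF assms(1) T(1,3)] that by blast
qed

lemma maxm_basis:
  fixes \<Sigma> :: "(real^'n) set set"
  assumes "toric_fano \<Sigma>" "maxm \<Sigma> T m" shows "lattice_basis T"
  using assms smooth_fan_props(2)[OF fano_sf[OF assms(1)]] unimodular_card_basis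
  unfolding maxm_def by blast

lemma maxm_sum:
  fixes \<Sigma> :: "(real^'n) set set"
  assumes "maxm \<Sigma> T m" "p = (\<Sum>t\<in>T. c t *\<^sub>R t)" shows "m \<bullet> p = (\<Sum>t\<in>T. c t)"
proof -
  have "m \<bullet> p = (\<Sum>t\<in>T. c t * (m \<bullet> t))" unfolding assms(2) by (simp add: inner_sum_right)
  also have "\<dots> = (\<Sum>t\<in>T. c t)" using assms(1) unfolding maxm_def by simp
  finally show ?thesis .
qed

lemma maxm_int:
  fixes \<Sigma> :: "(real^'n) set set"
  assumes "toric_fano \<Sigma>" "maxm \<Sigma> T m" "p \<in> lattice_pts" shows "m \<bullet> p \<in> \<int>"
proof -
  obtain \<beta> where \<beta>: "\<forall>b\<in>T. \<beta> b \<in> \<int>" "p = (\<Sum>b\<in>T. \<beta> b *\<^sub>R b)"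
    using lattice_coords[OF maxm_basis[OF assms(1,2)] assms(3)] by blast
  show ?thesis unfolding maxm_sum[OF assms(2) \<beta>(2)] using \<beta>(1) by (simp add: Ints_sum)
qed

lemma maxm_ray:
  fixes \<Sigma> :: "(real^'n) set set"
  assumes "toric_fano \<Sigma>" "maxm \<Sigma> T m" "u \<in> rays \<Sigma>"
  shows "m \<bullet> u \<le> 1" "u \<in> T \<Longrightarrow> m \<bullet> u = 1" "u \<notin> T \<Longrightarrow> m \<bullet> u \<le> 0" "m \<bullet> u = 1 \<longleftrightarrow> u \<in> T"
proof -
  have i: "m \<bullet> u \<in> \<int>" using maxm_int[OF assms(1,2) ray_lattice(1)[OF fano_sf[OF assms(1)] assms(3)]] .
  show a: "u \<in> T \<Longrightarrow> m \<bullet> u = 1" using assms(2) unfolding maxm_def by blast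
  show b: "u \<notin> T \<Longrightarrow> m \<bullet> u \<le> 0"
  proof -
    assume "u \<notin> T"
    then have "m \<bullet> u < 1" using assms(2,3) unfolding maxm_def by blast
    then show ?thesis using int_lt1 i by blast
  qed
  show "m \<bullet> u \<le> 1" using a b by (cases "u \<in> T") auto
  show "m \<bullet> u = 1 \<longleftrightarrow> u \<in> T" using a b by (cases "u \<in> T") auto
qed

lemma maxm_coords:
  fixes \<Sigma> :: "(real^'n) set set"
  assumes "toric_fano \<Sigma>" "maxm \<Sigma> T m" "p \<in> pos_cone T" "p \<in> lattice_pts"
  obtains c where "\<forall>t\<in>T. c t \<in> \<int> \<and> c t \<ge> 0" "p = (\<Sum>t\<in>T. c t *\<^sub>R t)" "m \<bullet> p = (\<Sum>t\<in>T. c t)"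
proof -
  obtain c where c: "\<forall>t\<in>T. c t \<ge> 0" "p = (\<Sum>t\<in>T. c t *\<^sub>R t)" using assms(3) pos_cone_def by blast
  have "\<forall>t\<in>T. c t \<in> \<int>" using lattice_coords_int[OF maxm_basis[OF assms(1,2)] assms(4) c(2)] by blast
  then show ?thesis using that c maxm_sum[OF assms(2) c(2)] by blast
qed

lemma sum_le1_cases:
  assumes "finite T" "\<forall>t\<in>T. c t \<in> \<int> \<and> c t \<ge> (0::real)" "(\<Sum>t\<in>T. c t) \<le> 1"
  shows "(\<forall>t\<in>T. c t = 0) \<or> (\<exists>t0\<in>T. c t0 = 1 \<and> (\<forall>t\<in>T - {t0}. c t = 0))"
proof (cases "\<forall>t\<in>T. c t = 0")
  case False
  then obtain t0 where t0: "t0 \<in> T" "c t0 \<noteq> 0" by blast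
  then have "c t0 \<ge> 1" using assms(2) int_gt0 by force
  have s: "(\<Sum>t\<in>T. c t) = c t0 + (\<Sum>t\<in>T - {t0}. c t)" using assms(1) t0(1) by (simp add: sum.remove)
  have nn: "(\<Sum>t\<in>T - {t0}. c t) \<ge> 0" by (intro sum_nonneg) (use assms(2) in auto)
  then have "(\<Sum>t\<in>T - {t0}. c t) = 0" using s assms(3) \<open>c t0 \<ge> 1\<close> by linarith
  then have "\<forall>t\<in>T - {t0}. c t = 0" using assms(1,2) sum_nonneg_eq_0_iff[of "T - {t0}" c] by auto
  moreover have "c t0 = 1" using s nn assms(3) \<open>c t0 \<ge> 1\<close> by linarith
  ultimately show ?thesis using t0(1) by blast
qed simp

lemma fano_SC:
  fixes \<Sigma> :: "(real^'n) set set"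
  assumes "toric_fano \<Sigma>" "a \<in> rays \<Sigma>" "b \<in> rays \<Sigma>" "\<not> adj \<Sigma> a b"
  shows "a + b = 0 \<or> a + b \<in> rays \<Sigma>"
proof -
  have sf: "smooth_fan \<Sigma>" using fano_sf[OF assms(1)] .
  obtain T m where Tm: "maxm \<Sigma> T m" "a + b \<in> pos_cone T" using maxm_point[OF assms(1)] by blast
  have lat: "a + b \<in> lattice_pts" using ray_lattice(1)[OF sf] assms(2,3) lattice_add by blast
  obtain c where c: "\<forall>t\<in>T. c t \<in> \<int> \<and> c t \<ge> 0" "a + b = (\<Sum>t\<in>T. c t *\<^sub>R t)" "m \<bullet> (a + b) = (\<Sum>t\<in>T. c t)"
    using maxm_coords[OF assms(1) Tm lat] by blast
  have TS: "T \<in> \<Sigma>" using Tm(1) maxm_def by blast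
  have nb: "\<not> (a \<in> T \<and> b \<in> T)" using assms(4) TS unfolding adj_def by blast
  have "m \<bullet> a + m \<bullet> b < 2"
    using maxm_ray[OF assms(1) Tm(1) assms(2)] maxm_ray[OF assms(1) Tm(1) assms(3)] nb by force
  moreover have "m \<bullet> a + m \<bullet> b \<in> \<int>"
    using maxm_int[OF assms(1) Tm(1)] ray_lattice(1)[OF sf] assms(2,3) by (simp add: Ints_add)
  ultimately have "m \<bullet> (a + b) \<le> 1" using int_lt2 by (simp add: inner_add_right)
  then have le: "(\<Sum>t\<in>T. c t) \<le> 1" using c(3) by simp
  have fT: "finite T" using unimodular_props(1)[OF smooth_fan_props(2)[OF sf TS]] .
  from sum_le1_cases[OF fT c(1) le] show ?thesis
  proof
    assume "\<forall>t\<in>T. c t = 0" then show ?thesis using c(2) by simp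
  next
    assume "\<exists>t0\<in>T. c t0 = 1 \<and> (\<forall>t\<in>T - {t0}. c t = 0)"
    then obtain t0 where t0: "t0 \<in> T" "c t0 = 1" "\<forall>t\<in>T - {t0}. c t = 0" by blast
    have "(\<Sum>t\<in>T. c t *\<^sub>R t) = c t0 *\<^sub>R t0 + (\<Sum>t\<in>T - {t0}. c t *\<^sub>R t)" using fT t0(1) by (simp add: sum.remove)
    also have "\<dots> = t0" using t0(2,3) by simp
    finally have "a + b = t0" using c(2) by simp
    then show ?thesis using cone_elem_ray[OF sf TS t0(1)] by simp
  qed
qed

lemma card_le2:
  assumes "finite A" "\<And>a b c. a \<in> A \<Longrightarrow> b \<in> A \<Longrightarrow> c \<in> A \<Longrightarrow> a \<noteq> b \<Longrightarrow> a \<noteq> c \<Longrightarrow> b \<noteq> c \<Longrightarrow> False"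
  shows "card A \<le> 2"
proof (rule ccontr)
  assume "\<not> card A \<le> 2"
  then have "3 \<le> card A" by simp
  then obtain B where B: "B \<subseteq> A" "card B = 3" using obtain_subset_with_card_n by metis
  then obtain a b c where "B = {a,b,c}" "a \<noteq> b" "b \<noteq> c" "a \<noteq> c" using card_3_iff by metis
  then show False using assms(2)[of a b c] B(1) by auto
qed

lemma card_le1:
  assumes "finite A" "\<And>a b. a \<in> A \<Longrightarrow> b \<in> A \<Longrightarrow> a = b"
  shows "card A \<le> 1"
proof -
  have "card A \<le> Suc 0" using card_le_Suc0_iff_eq[OF assms(1)] assms(2) by blast
  then show ?thesis by simp
qed

context
  fixes \<Sigma> :: "(real^'n) set set"
  assumes F: "toric_fano \<Sigma>"
begin

lemma sf: "smooth_fan \<Sigma>" using fano_sf[OF F] .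

lemma adj_sym: "adj \<Sigma> a b \<longleftrightarrow> adj \<Sigma> b a" unfolding adj_def by blast

lemma adj_refl: "a \<in> rays \<Sigma> \<Longrightarrow> adj \<Sigma> a a" unfolding adj_def rays_def by blast

lemma adj_max:
  assumes "adj \<Sigma> a b" obtains T m where "maxm \<Sigma> T m" "a \<in> T" "b \<in> T"
proof -
  obtain S where S: "S \<in> \<Sigma>" "a \<in> S" "b \<in> S" using assms adj_def by blast
  obtain T m where "maxm \<Sigma> T m" "S \<subseteq> T" using maxm_cone[OF F S(1)] by blast
  then show ?thesis using that S by blast
qed

lemma maxm_indep: "maxm \<Sigma> T m \<Longrightarrow> independent T"
  using unimodular_props(2)[OF smooth_fan_props(2)[OF sf]] unfolding maxm_def by blast

lemma maxm_in: "maxm \<Sigma> T m \<Longrightarrow> T \<in> \<Sigma>" unfolding maxm_def by blast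

lemma lat: "a \<in> rays \<Sigma> \<Longrightarrow> a \<in> lattice_pts" using ray_lattice(1)[OF sf] .
lemma nz: "a \<in> rays \<Sigma> \<Longrightarrow> a \<noteq> 0" using ray_lattice(2)[OF sf] .

lemma adj_of_max: "maxm \<Sigma> T m \<Longrightarrow> a \<in> T \<Longrightarrow> b \<in> T \<Longrightarrow> adj \<Sigma> a b"
  unfolding adj_def maxm_def by blast

lemma ADJ:
  assumes x: "x \<in> rays \<Sigma>" and y: "y \<in> rays \<Sigma>" and na: "\<not> adj \<Sigma> x y" and yx: "y \<noteq> - x"
  shows "x + y \<in> rays \<Sigma>" "adj \<Sigma> x (x + y)"
proof -
  have "x + y \<noteq> 0" using yx by (metis add.commute add_eq_0_iff)
  then show z: "x + y \<in> rays \<Sigma>" using fano_SC[OF F x y na] by blast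
  show "adj \<Sigma> x (x + y)"
  proof (rule ccontr)
    assume nxz: "\<not> adj \<Sigma> x (x + y)"
    have "x + (x + y) \<noteq> 0"
    proof
      assume "x + (x + y) = 0"
      then have "y = 2 *\<^sub>R (- x)" by (simp add: scaleR_2 algebra_simps) (metis add.assoc add_eq_0_iff2 minus_add_distrib)
      then show False using ray_not_double[OF sf y lattice_uminus[OF lat[OF x]]] by simp
    qed
    then have z': "x + (x + y) \<in> rays \<Sigma>" using fano_SC[OF F x z nxz] by blast
    obtain T m where Tm: "maxm \<Sigma> T m" "x + y \<in> T" using adj_max[OF adj_refl[OF z]] by blast
    have xT: "x \<notin> T" using nxz adj_of_max[OF Tm(1) _ Tm(2)] by blast
    have mz: "m \<bullet> (x + y) = 1" using maxm_ray(2)[OF F Tm(1) z Tm(2)] .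
    have mx: "m \<bullet> x \<le> 0" using maxm_ray(3)[OF F Tm(1) x xT] .
    have my: "m \<bullet> y \<le> 1" using maxm_ray(1)[OF F Tm(1) y] .
    have mx0: "m \<bullet> x = 0" and my1: "m \<bullet> y = 1" using mz mx my by (simp_all add: inner_add_right)
    then have yT: "y \<in> T" using maxm_ray(4)[OF F Tm(1) y] by simp
    have "m \<bullet> (x + (x + y)) = m \<bullet> x + (m \<bullet> x + m \<bullet> y)" by (simp only: inner_add_right)
    then have "m \<bullet> (x + (x + y)) = 1" using mx0 my1 by simp
    then have z'T: "x + (x + y) \<in> T" using maxm_ray(4)[OF F Tm(1) z'] by simp
    have xnz: "x \<noteq> 0" using nz[OF x] .
    have d1: "y \<noteq> x + (x + y)"
    proof
      assume "y = x + (x + y)"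
      then have "2 *\<^sub>R x = 0" by (simp add: scaleR_2 algebra_simps)
      then show False using xnz by simp
    qed
    have d2: "x + y \<noteq> x + (x + y)" using xnz by simp
    have "x + (x + y) = 2 *\<^sub>R (x + y) - y" by (simp add: algebra_simps scaleR_2)
    then have "x + (x + y) \<in> span (T - {x + (x + y)})"
      using yT Tm(2) d1 d2 by (metis (no_types, lifting) DiffI singletonD span_base span_diff span_scale)
    then show False using indep_not_in_span[OF maxm_indep[OF Tm(1)] z'T] by blast
  qed
qed

end

lemma span_rel4:
  assumes "a = b + c - d" "b \<in> T" "c \<in> T" "d \<in> T" "a \<noteq> b" "a \<noteq> c" "a \<noteq> d"
  shows "a \<in> span (T - {a})"
proof -
  have "b \<in> span (T - {a})" "c \<in> span (T - {a})" "d \<in> span (T - {a})"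
    using assms(2-7) by (auto intro: span_base)
  then show ?thesis unfolding assms(1) by (intro span_diff span_add)
qed

context
  fixes \<Sigma> :: "(real^'n) set set"
  assumes F: "toric_fano \<Sigma>"
begin

lemma no_half:
  assumes a: "a \<in> rays \<Sigma>" and b: "b \<in> rays \<Sigma>" and ab: "a \<noteq> b" and p: "p \<in> lattice_pts" "p \<noteq> 0"
  shows "a + b \<noteq> 2 *\<^sub>R p"
proof
  assume h: "a + b = 2 *\<^sub>R p"
  show False
  proof (cases "adj \<Sigma> a b")
    case True
    then obtain S where "S \<in> \<Sigma>" "a \<in> S" "b \<in> S" unfolding adj_def by blast
    then show False using adj_not_half[OF sf[OF F] _ _ _ ab p(1)] h by blast
  next
    case False
    from fano_SC[OF F a b False] show False
    proof
      assume "a + b = 0" then show False using h p(2) by simp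
    next
      assume "a + b \<in> rays \<Sigma>" then show False using ray_not_double[OF sf[OF F] _ p(1)] h by blast
    qed
  qed
qed

lemma STEP:
  assumes x: "x \<in> rays \<Sigma>" and y1: "y1 \<in> rays \<Sigma>" "\<not> adj \<Sigma> x y1" "y1 \<noteq> - x"
    and y: "y \<in> rays \<Sigma>" "\<not> adj \<Sigma> x y" "y \<noteq> - x"
    and ne: "y1 \<noteq> y" and nz0: "x + y1 + y \<noteq> 0"
  shows "x + y1 + y \<in> rays \<Sigma>" "\<not> adj \<Sigma> x (x + y1 + y)" "x + y1 + y \<noteq> - x"
    "x + y1 + y \<noteq> y1" "x + y1 + (x + y1 + y) \<noteq> 0"
proof -
  define z1 where "z1 = x + y1"
  define z where "z = x + y"
  define r where "r = x + y1 + y"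
  have z1: "z1 \<in> rays \<Sigma>" "adj \<Sigma> x z1" using ADJ[OF F x y1] unfolding z1_def by auto
  have z: "z \<in> rays \<Sigma>" "adj \<Sigma> x z" using ADJ[OF F x y(1,2,3)] unfolding z_def by auto
  have xnz: "x \<noteq> 0" using nz[OF F x] .
  have y1nz: "y1 \<noteq> 0" using nz[OF F y1(1)] .
  have ynz: "y \<noteq> 0" using nz[OF F y(1)] .
  have na: "\<not> adj \<Sigma> y1 z"
  proof
    assume "adj \<Sigma> y1 z"
    then obtain T m where Tm: "maxm \<Sigma> T m" "y1 \<in> T" "z \<in> T" using adj_max[OF F] by blast
    have "m \<bullet> y1 = 1" "m \<bullet> z = 1" using maxm_ray(2)[OF F Tm(1)] y1(1) z(1) Tm(2,3) by auto
    moreover have "y1 + z = y + z1" unfolding z_def z1_def by (simp add: algebra_simps)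
    ultimately have "m \<bullet> y + m \<bullet> z1 = 2" by (metis inner_add_right one_add_one)
    moreover have "m \<bullet> y \<le> 1" "m \<bullet> z1 \<le> 1" using maxm_ray(1)[OF F Tm(1)] y(1) z1(1) by auto
    ultimately have "m \<bullet> y = 1" "m \<bullet> z1 = 1" by linarith+
    then have yT: "y \<in> T" and z1T: "z1 \<in> T" using maxm_ray(4)[OF F Tm(1)] y(1) z1(1) by auto
    have "z1 = y1 + z - y" unfolding z_def z1_def by (simp add: algebra_simps)
    moreover have "z1 \<noteq> y1" unfolding z1_def using xnz by simp
    moreover have "z1 \<noteq> z" unfolding z1_def z_def using ne by simp
    moreover have "z1 \<noteq> y" using z1(2) y(2) by blast
    ultimately have "z1 \<in> span (T - {z1})" using span_rel4 Tm(2,3) yT by blast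
    then show False using indep_not_in_span[OF maxm_indep[OF F Tm(1)] z1T] by blast
  qed
  have yzr: "y1 + z = r" unfolding z_def r_def by (simp add: algebra_simps)
  have "r \<noteq> 0" using nz0 unfolding r_def .
  then have r: "r \<in> rays \<Sigma>" using fano_SC[OF F y1(1) z(1) na] unfolding yzr by blast
  then show "x + y1 + y \<in> rays \<Sigma>" unfolding r_def .
  have rx: "r \<noteq> x"
  proof
    assume "r = x"
    then have "y1 + y = 0" unfolding r_def by (simp add: algebra_simps)
    then have "z + z1 = 2 *\<^sub>R x" unfolding z_def z1_def by (simp add: algebra_simps scaleR_2)
    moreover have "z \<noteq> z1" unfolding z_def z1_def using ne by simp
    ultimately show False using no_half[OF z(1) z1(1) _ lat[OF F x] xnz] by blast
  qed
  show nar: "\<not> adj \<Sigma> x (x + y1 + y)"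
  proof
    assume "adj \<Sigma> x (x + y1 + y)"
    then obtain T m where Tm: "maxm \<Sigma> T m" "x \<in> T" "r \<in> T" using adj_max[OF F] unfolding r_def by blast
    have "m \<bullet> x = 1" "m \<bullet> r = 1" using maxm_ray(2)[OF F Tm(1)] x r Tm(2,3) by auto
    moreover have "r = z1 + z - x" unfolding z_def z1_def r_def by (simp add: algebra_simps)
    ultimately have "m \<bullet> z1 + m \<bullet> z = 2" by (simp add: inner_diff_right inner_add_right)
    moreover have "m \<bullet> z \<le> 1" "m \<bullet> z1 \<le> 1" using maxm_ray(1)[OF F Tm(1)] z(1) z1(1) by auto
    ultimately have "m \<bullet> z = 1" "m \<bullet> z1 = 1" by linarith+
    then have zT: "z \<in> T" and z1T: "z1 \<in> T" using maxm_ray(4)[OF F Tm(1)] z(1) z1(1) by auto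
    have "r = z1 + z - x" unfolding z_def z1_def r_def by (simp add: algebra_simps)
    moreover have "r \<noteq> z1" unfolding r_def z1_def using ynz by simp
    moreover have "r \<noteq> z" unfolding r_def z_def using y1nz by (simp add: algebra_simps)
    ultimately have "r \<in> span (T - {r})" using span_rel4 Tm(2) zT z1T rx by blast
    then show False using indep_not_in_span[OF maxm_indep[OF F Tm(1)] Tm(3)] by blast
  qed
  show "x + y1 + y \<noteq> - x"
  proof
    assume h: "x + y1 + y = - x"
    have "y1 + y = (x + y1 + y) - x" by (simp add: algebra_simps)
    also have "\<dots> = - x - x" by (simp add: h)
    also have "\<dots> = 2 *\<^sub>R (- x)" by (simp add: scaleR_2)
    finally have "y1 + y = 2 *\<^sub>R (- x)" .
    moreover have "- x \<noteq> 0" using xnz by simp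
    ultimately show False using no_half[OF y1(1) y(1) ne lattice_uminus[OF lat[OF F x]]] by blast
  qed
  show "x + y1 + y \<noteq> y1"
  proof
    assume h: "x + y1 + y = y1"
    have "y = (x + y1 + y) - y1 - x" by (simp add: algebra_simps)
    also have "\<dots> = - x" by (simp add: h)
    finally have "y = - x" .
    then show False using y(3) by simp
  qed
  show "x + y1 + (x + y1 + y) \<noteq> 0"
  proof
    assume h: "x + y1 + (x + y1 + y) = 0"
    have "y = (x + y1 + (x + y1 + y)) - (x + y1) - (x + y1)" by (simp add: algebra_simps)
    also have "\<dots> = - (x + y1) - (x + y1)" by (simp add: h)
    also have "\<dots> = 2 *\<^sub>R (- (x + y1))" by (simp add: scaleR_2)
    finally have "y = 2 *\<^sub>R (- (x + y1))" .
    then show False using ray_not_double[OF sf[OF F] y(1) lattice_uminus[OF lattice_add[OF lat[OF F x] lat[OF F y1(1)]]]] by blast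
  qed
qed

end

context
  fixes \<Sigma> :: "(real^'n) set set"
  assumes F: "toric_fano \<Sigma>"
begin

lemma LemmaC:
  assumes x: "x \<in> rays \<Sigma>" and y1: "y1 \<in> rays \<Sigma>" "\<not> adj \<Sigma> x y1" "y1 \<noteq> - x"
    and y2: "y2 \<in> rays \<Sigma>" "\<not> adj \<Sigma> x y2" "y2 \<noteq> - x" and ne: "y1 \<noteq> y2"
  shows "x + y1 + y2 = 0"
proof (rule ccontr)
  assume h0: "x + y1 + y2 \<noteq> 0"
  define u where "u = (\<lambda>k::nat. of_nat k *\<^sub>R (x + y1) + y2)"
  have P: "u k \<in> rays \<Sigma> \<and> \<not> adj \<Sigma> x (u k) \<and> u k \<noteq> - x \<and> y1 \<noteq> u k \<and> x + y1 + u k \<noteq> 0" for k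
  proof (induction k)
    case 0
    then show ?case using y2 ne h0 unfolding u_def by simp
  next
    case (Suc k)
    then have a: "u k \<in> rays \<Sigma>" "\<not> adj \<Sigma> x (u k)" "u k \<noteq> - x" "y1 \<noteq> u k" "x + y1 + u k \<noteq> 0" by auto
    have eq: "u (Suc k) = x + y1 + u k" unfolding u_def by (simp add: algebra_simps)
    note S = STEP[OF F x y1 a(1,2,3,4,5)]
    show ?case unfolding eq using S by auto
  qed
  have inj: "inj u"
  proof (rule injI)
    fix k l assume "u k = u l"
    then have "of_nat k *\<^sub>R (x + y1) = of_nat l *\<^sub>R (x + y1)" unfolding u_def by simp
    then have "(of_nat k - of_nat l) *\<^sub>R (x + y1) = 0" by (simp add: scaleR_diff_left)
    moreover have "x + y1 \<noteq> 0" using y1(3) by (metis add.commute add_eq_0_iff)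
    ultimately show "k = l" by simp
  qed
  have "range u \<subseteq> rays \<Sigma>" using P by blast
  then have "finite (range u)" using rays_finite[OF sf[OF F]] finite_subset by blast
  then have "finite (UNIV :: nat set)" using inj finite_imageD by blast
  then show False by simp
qed

lemma nonadj_card: assumes x: "x \<in> rays \<Sigma>" shows "card (nonadj \<Sigma> x) \<le> 3"
proof -
  define N' where "N' = nonadj \<Sigma> x - {- x}"
  have fin: "finite (nonadj \<Sigma> x)" using rays_finite[OF sf[OF F]] unfolding nonadj_def by simp
  then have finN': "finite N'" unfolding N'_def by simp
  have "card N' \<le> 2"
  proof (rule card_le2[OF finN'])
    fix a b c assume abc: "a \<in> N'" "b \<in> N'" "c \<in> N'" "a \<noteq> b" "a \<noteq> c" "b \<noteq> c"
    then have m: "a \<in> rays \<Sigma>" "\<not> adj \<Sigma> x a" "a \<noteq> - x" "b \<in> rays \<Sigma>" "\<not> adj \<Sigma> x b" "b \<noteq> - x"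
        "c \<in> rays \<Sigma>" "\<not> adj \<Sigma> x c" "c \<noteq> - x" unfolding N'_def nonadj_def by auto
    have "x + a + b = 0" using LemmaC[OF x m(1,2,3,4,5,6) abc(4)] .
    moreover have "x + a + c = 0" using LemmaC[OF x m(1,2,3,7,8,9) abc(5)] .
    ultimately have "b = c" by (metis add_left_cancel)
    then show False using abc(6) by simp
  qed
  have "nonadj \<Sigma> x \<subseteq> insert (- x) N'" unfolding N'_def by blast
  then have "card (nonadj \<Sigma> x) \<le> card (insert (- x) N')" using finN' by (simp add: card_mono)
  also have "\<dots> \<le> Suc (card N')" using finN' by (simp add: card_insert_if)
  finally show ?thesis using \<open>card N' \<le> 2\<close> by simp
qed

end

lemma pos_cone_mono:
  assumes "finite T" "S \<subseteq> T" shows "pos_cone S \<subseteq> pos_cone T"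
proof
  fix y assume "y \<in> pos_cone S"
  then obtain c where c: "\<forall>v\<in>S. c v \<ge> 0" "y = (\<Sum>v\<in>S. c v *\<^sub>R v)" unfolding pos_cone_def by blast
  have "y = (\<Sum>v\<in>T. (if v \<in> S then c v else 0) *\<^sub>R v)"
  proof -
    have "(\<Sum>v\<in>T. (if v \<in> S then c v else 0) *\<^sub>R v) = (\<Sum>v\<in>T. (if v \<in> S then c v *\<^sub>R v else 0))"
      by (rule sum.cong) auto
    also have "\<dots> = (\<Sum>v\<in>T \<inter> S. c v *\<^sub>R v)" using assms(1) by (simp add: sum.inter_restrict)
    also have "T \<inter> S = S" using assms(2) by auto
    finally show ?thesis using c(2) by simp
  qed
  moreover have "\<forall>v\<in>T. (if v \<in> S then c v else 0) \<ge> 0" using c(1) by simp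
  ultimately show "y \<in> pos_cone T" unfolding pos_cone_def mem_Collect_eq
    by (intro exI[of _ "\<lambda>v. if v \<in> S then c v else 0"]) simp
qed

lemma int_recip: assumes "(d::real) \<in> \<int>" "d > 0" "1 / d \<in> \<int>" shows "d = 1"
proof -
  have "d \<ge> 1" using int_gt0 assms(1,2) by blast
  moreover have "1 / d > 0" using assms(2) by simp
  then have "1 / d \<ge> 1" using int_gt0 assms(3) by blast
  ultimately show ?thesis using assms(2) by (smt (verit) le_divide_eq_1_pos)
qed

context
  fixes \<Sigma>X \<Sigma>Y :: "(real^'n) set set"
  assumes F: "toric_fano \<Sigma>X" and Y: "smooth_complete_fan \<Sigma>Y" and R: "refines \<Sigma>X \<Sigma>Y"
begin

lemma sfY: "smooth_fan \<Sigma>Y" using Y unfolding smooth_complete_fan_def by blast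
lemma sfX: "smooth_fan \<Sigma>X" using sf[OF F] .

lemma refine_cone: assumes "S \<in> \<Sigma>X" obtains T where "T \<in> \<Sigma>Y" "pos_cone S \<subseteq> pos_cone T"
  using R assms unfolding refines_def by blast

lemma rays_sub: assumes w: "w \<in> rays \<Sigma>Y" shows "w \<in> rays \<Sigma>X"
proof -
  obtain S where S: "S \<in> \<Sigma>X" "w \<in> pos_cone S" using complete_cover[OF fano_scf[OF F]] by blast
  obtain T where T: "T \<in> \<Sigma>Y" "pos_cone S \<subseteq> pos_cone T" using refine_cone[OF S(1)] by blast
  have wT: "w \<in> T" using ray_in_cone[OF sfY w T(1)] S(2) T(2) by blast
  have fS: "finite S" using unimodular_props(1)[OF smooth_fan_props(2)[OF sfX S(1)]] .
  have fT: "finite T" "independent T" using unimodular_props(1,2)[OF smooth_fan_props(2)[OF sfY T(1)]] by auto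
  obtain c where c: "\<forall>s\<in>S. c s \<ge> 0" "w = (\<Sum>s\<in>S. c s *\<^sub>R s)" using S(2) pos_cone_def by blast
  have "\<forall>s\<in>S. \<exists>d. (\<forall>t\<in>T. d t \<ge> 0) \<and> s = (\<Sum>t\<in>T. d t *\<^sub>R t)"
  proof
    fix s assume "s \<in> S"
    then have "s \<in> pos_cone T" using pos_cone_mem[OF fS] T(2) by blast
    then show "\<exists>d. (\<forall>t\<in>T. d t \<ge> 0) \<and> s = (\<Sum>t\<in>T. d t *\<^sub>R t)" unfolding pos_cone_def by blast
  qed
  then obtain d where d: "\<And>s. s \<in> S \<Longrightarrow> (\<forall>t\<in>T. d s t \<ge> 0) \<and> s = (\<Sum>t\<in>T. d s t *\<^sub>R t)"
    by metis
  have "w = (\<Sum>s\<in>S. c s *\<^sub>R (\<Sum>t\<in>T. d s t *\<^sub>R t))" using c(2) d by (metis (no_types, lifting) sum.cong)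
  also have "\<dots> = (\<Sum>s\<in>S. \<Sum>t\<in>T. (c s * d s t) *\<^sub>R t)" by (simp add: scaleR_sum_right)
  also have "\<dots> = (\<Sum>t\<in>T. \<Sum>s\<in>S. (c s * d s t) *\<^sub>R t)" by (rule sum.swap)
  also have "\<dots> = (\<Sum>t\<in>T. (\<Sum>s\<in>S. c s * d s t) *\<^sub>R t)" by (simp add: scaleR_sum_left)
  finally have w1: "w = (\<Sum>t\<in>T. (\<Sum>s\<in>S. c s * d s t) *\<^sub>R t)" .
  have w2: "w = (\<Sum>t\<in>T. (if t = w then 1 else 0) *\<^sub>R t)"
  proof -
    have "(\<Sum>t\<in>T. (if t = w then 1 else 0) *\<^sub>R t) = (\<Sum>t\<in>T. (if t = w then t else 0))" by (rule sum.cong) auto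
    also have "\<dots> = w" using fT(1) wT by simp
    finally show ?thesis by simp
  qed
  have wnz: "w \<noteq> 0" using ray_lattice(2)[OF sfY w] .
  have "\<exists>s0\<in>S. c s0 \<noteq> 0"
  proof (rule ccontr)
    assume "\<not> (\<exists>s0\<in>S. c s0 \<noteq> 0)"
    then have "w = 0" using c(2) by simp
    then show False using wnz by simp
  qed
  then obtain s0 where s0: "s0 \<in> S" "c s0 \<noteq> 0" by blast
  have cpos: "c s0 > 0" using s0 c(1) by force
  have dz: "d s0 t = 0" if "t \<in> T" "t \<noteq> w" for t
  proof -
    have eqs: "(\<Sum>t\<in>T. (\<Sum>s\<in>S. c s * d s t) *\<^sub>R t) = (\<Sum>t\<in>T. (if t = w then 1 else 0) *\<^sub>R t)"
      using w1 w2 by (rule trans[OF sym])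
    have "(\<Sum>s\<in>S. c s * d s t) = (if t = w then 1 else 0)"
      using coord_unique[OF fT(1,2) eqs that(1)] .
    then have sum0: "(\<Sum>s\<in>S. c s * d s t) = 0" using that(2) by simp
    have nn: "\<forall>s\<in>S. c s * d s t \<ge> 0"
    proof
      fix s assume sS: "s \<in> S"
      then have "d s t \<ge> 0" using d[OF sS] that(1) by blast
      moreover have "c s \<ge> 0" using c(1) sS by blast
      ultimately show "c s * d s t \<ge> 0" by simp
    qed
    have iff: "(\<Sum>s\<in>S. c s * d s t) = 0 \<longleftrightarrow> (\<forall>s\<in>S. c s * d s t = 0)"
      by (rule sum_nonneg_eq_0_iff[OF fS]) (use nn in blast)
    have "c s0 * d s0 t = 0" using iff sum0 s0(1) by blast
    then show ?thesis using cpos by simp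
  qed
  have "s0 = (\<Sum>t\<in>T. d s0 t *\<^sub>R t)" using d[OF s0(1)] by blast
  also have "\<dots> = d s0 w *\<^sub>R w + (\<Sum>t\<in>T - {w}. d s0 t *\<^sub>R t)" using fT(1) wT by (simp add: sum.remove)
  also have "(\<Sum>t\<in>T - {w}. d s0 t *\<^sub>R t) = 0" using dz by (intro sum.neutral) auto
  finally have s0w: "s0 = d s0 w *\<^sub>R w" by simp
  have s0r: "s0 \<in> rays \<Sigma>X" using cone_elem_ray[OF sfX S(1) s0(1)] .
  have "d s0 w \<ge> 0" using d[OF s0(1)] wT by blast
  moreover have "d s0 w \<noteq> 0" using s0w ray_lattice(2)[OF sfX s0r] by auto
  ultimately have dpos: "d s0 w > 0" by simp
  obtain Bw where Bw: "w \<in> Bw" "lattice_basis Bw" using ray_basis[OF sfY w] by blast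
  have i1: "d s0 w \<in> \<int>" using basis_multiple_int[OF Bw(2,1) ray_lattice(1)[OF sfX s0r] s0w] .
  obtain Bs where Bs: "s0 \<in> Bs" "lattice_basis Bs" using ray_basis[OF sfX s0r] by blast
  define \<delta> where "\<delta> = d s0 w"
  have "(1 / \<delta>) *\<^sub>R s0 = (1 / \<delta>) *\<^sub>R (\<delta> *\<^sub>R w)" using s0w unfolding \<delta>_def by simp
  also have "\<dots> = w" using dpos unfolding \<delta>_def by simp
  finally have "w = (1 / d s0 w) *\<^sub>R s0" unfolding \<delta>_def by simp
  then have i2: "1 / d s0 w \<in> \<int>" using basis_multiple_int[OF Bs(2,1) ray_lattice(1)[OF sfY w]] by blast
  have "d s0 w = 1" using int_recip[OF i1 dpos i2] .
  then have "s0 = w" using s0w by simp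
  then show ?thesis using s0r by simp
qed

end

context
  fixes \<Sigma>X \<Sigma>Y :: "(real^'n) set set"
  assumes F: "toric_fano \<Sigma>X" and Y: "smooth_complete_fan \<Sigma>Y" and R: "refines \<Sigma>X \<Sigma>Y"
begin

lemma img_props:
  assumes "image_cone \<Sigma>Y e \<tau>"
  shows "\<tau> \<in> \<Sigma>Y" "e \<in> pos_cone \<tau>" "\<And>T. T \<in> \<Sigma>Y \<Longrightarrow> e \<in> pos_cone T \<Longrightarrow> \<tau> \<subseteq> T"
    "finite \<tau>" "independent \<tau>" "\<tau> \<subseteq> rays \<Sigma>Y" "card \<tau> \<le> CARD('n)"
proof -
  show t: "\<tau> \<in> \<Sigma>Y" using assms image_cone_def by blast
  show "e \<in> pos_cone \<tau>" using assms image_cone_def by blast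
  show "\<And>T. T \<in> \<Sigma>Y \<Longrightarrow> e \<in> pos_cone T \<Longrightarrow> \<tau> \<subseteq> T" using assms image_cone_def by blast
  note u = unimodular_props[OF smooth_fan_props(2)[OF sfY[OF F Y R] t]]
  show "finite \<tau>" "independent \<tau>" "card \<tau> \<le> CARD('n)" using u by auto
  show "\<tau> \<subseteq> rays \<Sigma>Y" using cone_elem_ray[OF sfY[OF F Y R] t] by blast
qed

lemma fan_card: "S \<in> \<Sigma>Y \<Longrightarrow> card S \<le> CARD('n) \<and> finite S"
  using unimodular_props(1,3)[OF smooth_fan_props(2)[OF sfY[OF F Y R]]] by blast

lemma insert_not_fan:
  assumes "finite \<tau>" "card \<tau> = CARD('n)" "w \<notin> \<tau>" shows "insert w \<tau> \<notin> \<Sigma>Y"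
proof
  assume "insert w \<tau> \<in> \<Sigma>Y"
  then have "card (insert w \<tau>) \<le> CARD('n)" using fan_card by blast
  then show False using assms by simp
qed

lemma W_nonadj:
  assumes e: "e \<in> rays \<Sigma>X" and img: "image_cone \<Sigma>Y e \<tau>" and w: "w \<in> rays \<Sigma>Y" "w \<notin> \<tau>" "insert w \<tau> \<notin> \<Sigma>Y"
  shows "w \<in> rays \<Sigma>X" "\<not> adj \<Sigma>X e w"
proof -
  show "w \<in> rays \<Sigma>X" using rays_sub[OF F Y R w(1)] .
  show "\<not> adj \<Sigma>X e w"
  proof
    assume "adj \<Sigma>X e w"
    then obtain S where S: "S \<in> \<Sigma>X" "e \<in> S" "w \<in> S" unfolding adj_def by blast
    obtain T where T: "T \<in> \<Sigma>Y" "pos_cone S \<subseteq> pos_cone T" using refine_cone[OF F Y R S(1)] by blast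
    have fS: "finite S" using unimodular_props(1)[OF smooth_fan_props(2)[OF sfX[OF F Y R] S(1)]] .
    have "e \<in> pos_cone T" using pos_cone_mem[OF fS S(2)] T(2) by blast
    then have tT: "\<tau> \<subseteq> T" using img_props(3)[OF img T(1)] by blast
    have "w \<in> pos_cone T" using pos_cone_mem[OF fS S(3)] T(2) by blast
    then have "w \<in> T" using ray_in_cone[OF sfY[OF F Y R] w(1) T(1)] by blast
    then have "insert w \<tau> \<subseteq> T" using tT by blast
    then have "insert w \<tau> \<in> \<Sigma>Y" using smooth_fan_props(3)[OF sfY[OF F Y R] T(1)] by blast
    then show False using w(3) by blast
  qed
qed

lemma adj_in_tau:
  assumes img: "image_cone \<Sigma>Y e \<tau>" and ct: "card \<tau> = CARD('n)" and a: "adj \<Sigma>X e u"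
  shows "u \<in> pos_cone \<tau>"
proof -
  obtain S where S: "S \<in> \<Sigma>X" "e \<in> S" "u \<in> S" using a unfolding adj_def by blast
  obtain T where T: "T \<in> \<Sigma>Y" "pos_cone S \<subseteq> pos_cone T" using refine_cone[OF F Y R S(1)] by blast
  have fS: "finite S" using unimodular_props(1)[OF smooth_fan_props(2)[OF sfX[OF F Y R] S(1)]] .
  have "e \<in> pos_cone T" using pos_cone_mem[OF fS S(2)] T(2) by blast
  then have tT: "\<tau> \<subseteq> T" using img_props(3)[OF img T(1)] by blast
  have cT: "card T \<le> CARD('n)" "finite T" using fan_card[OF T(1)] by auto
  have "card \<tau> = card T" using card_mono[OF cT(2) tT] cT(1) ct by simp
  then have "\<tau> = T" using card_subset_eq[OF cT(2) tT] by simp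
  then show ?thesis using pos_cone_mem[OF fS S(3)] T(2) by blast
qed

lemma W_nonempty:
  assumes e: "e \<in> rays \<Sigma>X" and img: "image_cone \<Sigma>Y e \<tau>" and ct: "card \<tau> = CARD('n)"
  obtains w where "w \<in> rays \<Sigma>Y" "w \<notin> \<tau>" "insert w \<tau> \<notin> \<Sigma>Y"
proof -
  obtain T where T: "T \<in> \<Sigma>Y" "- e \<in> pos_cone T" using complete_cover[OF Y] by blast
  have "\<not> T \<subseteq> \<tau>"
  proof
    assume "T \<subseteq> \<tau>"
    then have "- e \<in> pos_cone \<tau>" using pos_cone_mono[OF img_props(4)[OF img]] T(2) by blast
    then have "e = 0" using pos_cone_antisym[OF img_props(4,5)[OF img] img_props(2)[OF img]] by blast
    then show False using nz[OF F e] by simp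
  qed
  then obtain w where w: "w \<in> T" "w \<notin> \<tau>" by blast
  have "w \<in> rays \<Sigma>Y" using cone_elem_ray[OF sfY[OF F Y R] T(1) w(1)] .
  moreover have "insert w \<tau> \<notin> \<Sigma>Y" using insert_not_fan[OF img_props(4)[OF img] ct w(2)] .
  ultimately show ?thesis using that w(2) by blast
qed

lemma K1:
  assumes e: "e \<in> rays \<Sigma>X" "image_cone \<Sigma>Y e \<tau>" and e': "e' \<in> rays \<Sigma>X" "image_cone \<Sigma>Y e' \<tau>"
    and ct: "card \<tau> = CARD('n)" and ne: "e \<noteq> e'"
    and w: "w \<in> rays \<Sigma>Y" "w \<notin> \<tau>" "insert w \<tau> \<notin> \<Sigma>Y"
  shows "w = - e \<or> w = - e'"
proof (rule ccontr)
  assume h: "\<not> (w = - e \<or> w = - e')"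
  have wX: "w \<in> rays \<Sigma>X" and n1: "\<not> adj \<Sigma>X e w" using W_nonadj[OF e w] by auto
  have n2: "\<not> adj \<Sigma>X e' w" using W_nonadj[OF e' w] by auto
  have a1: "e \<noteq> - w" using h by auto
  have a2: "e' \<noteq> - w" using h by auto
  have m1: "\<not> adj \<Sigma>X w e" using n1 adj_sym[OF F] by blast
  have m2: "\<not> adj \<Sigma>X w e'" using n2 adj_sym[OF F] by blast
  have h0: "w + e + e' = 0" using LemmaC[OF F wX e(1) m1 a1 e'(1) m2 a2 ne] .
  have "e + w = (w + e + e') - e'" by (simp add: algebra_simps)
  also have "\<dots> = - e'" by (simp add: h0)
  finally have s: "e + w = - e'" .
  have "adj \<Sigma>X e (e + w)" using ADJ(2)[OF F e(1) wX n1] h by auto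
  then have "- e' \<in> pos_cone \<tau>" using adj_in_tau[OF e(2) ct] s by simp
  then have "e' = 0" using pos_cone_antisym[OF img_props(4,5)[OF e'(2)] img_props(2)[OF e'(2)]] by blast
  then show False using nz[OF F e'(1)] by simp
qed

lemma K2:
  assumes e: "e \<in> rays \<Sigma>X" "image_cone \<Sigma>Y e \<tau>" and e': "e' \<in> rays \<Sigma>X" "image_cone \<Sigma>Y e' \<tau>"
    and ct: "card \<tau> = CARD('n)" and ne: "e \<noteq> e'"
    and w1: "- e \<in> rays \<Sigma>Y" "- e \<notin> \<tau>" "insert (- e) \<tau> \<notin> \<Sigma>Y"
    and w2: "- e' \<in> rays \<Sigma>Y" "- e' \<notin> \<tau>" "insert (- e') \<tau> \<notin> \<Sigma>Y"
  shows False
proof -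
  have x2: "- e' \<in> rays \<Sigma>X" and n2: "\<not> adj \<Sigma>X e (- e')" using W_nonadj[OF e w2] by auto
  have x1: "- e \<in> rays \<Sigma>X" and n1: "\<not> adj \<Sigma>X e' (- e)" using W_nonadj[OF e' w1] by auto
  have "- e' \<noteq> - e" using ne by simp
  then have "adj \<Sigma>X e (e + - e')" using ADJ(2)[OF F e(1) x2 n2] by blast
  then have p1: "e - e' \<in> pos_cone \<tau>" using adj_in_tau[OF e(2) ct] by simp
  have "- e \<noteq> - e'" using ne by simp
  then have "adj \<Sigma>X e' (e' + - e)" using ADJ(2)[OF F e'(1) x1 n1] by blast
  then have p2: "- (e - e') \<in> pos_cone \<tau>" using adj_in_tau[OF e'(2) ct] by simp
  have "e - e' = 0" using pos_cone_antisym[OF img_props(4,5)[OF e(2)] p1 p2] .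
  then show False using ne by simp
qed

end

context
  fixes \<Sigma>X \<Sigma>Y :: "(real^'n) set set"
  assumes F: "toric_fano \<Sigma>X" and Y: "smooth_complete_fan \<Sigma>Y" and R: "refines \<Sigma>X \<Sigma>Y"
begin

lemma PN:
  assumes e0: "e0 \<in> rays \<Sigma>X" and img: "image_cone \<Sigma>Y e0 \<tau>" and ct: "card \<tau> = CARD('n)"
    and Wiff: "\<And>w. (w \<in> rays \<Sigma>Y \<and> w \<notin> \<tau> \<and> insert w \<tau> \<notin> \<Sigma>Y) \<longleftrightarrow> w = - e0"
  shows "is_Pn_fan \<Sigma>Y"
proof -
  note sY = sfY[OF F Y R]
  define w where "w = - e0"
  have wY: "w \<in> rays \<Sigma>Y" "w \<notin> \<tau>" using Wiff[of w] unfolding w_def by auto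
  note tp = img_props[OF F Y R img]
  have tb: "lattice_basis \<tau>" using unimodular_card_basis[OF smooth_fan_props(2)[OF sY tp(1)] ct] .
  have RY: "rays \<Sigma>Y = insert w \<tau>"
  proof
    show "insert w \<tau> \<subseteq> rays \<Sigma>Y" using tp(6) wY(1) by blast
    show "rays \<Sigma>Y \<subseteq> insert w \<tau>"
    proof
      fix v assume v: "v \<in> rays \<Sigma>Y"
      show "v \<in> insert w \<tau>"
      proof (cases "v \<in> \<tau>")
        case False
        then have "insert v \<tau> \<notin> \<Sigma>Y" using insert_not_fan[OF F Y R tp(4) ct] by blast
        then have "v = w" using Wiff[of v] v False unfolding w_def by blast
        then show ?thesis by simp
      qed simp
    qed
  qed
  obtain a where a: "\<forall>v\<in>\<tau>. a v \<ge> 0" "e0 = (\<Sum>v\<in>\<tau>. a v *\<^sub>R v)" using tp(2) pos_cone_def by blast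
  have aint: "\<forall>v\<in>\<tau>. a v \<in> \<int>"
    using lattice_coords_int[OF tb ray_lattice(1)[OF sfX[OF F Y R] e0] a(2)] by blast
  have apos: "a v > 0" if vt: "v \<in> \<tau>" for v
  proof (rule ccontr)
    assume "\<not> a v > 0"
    then have av: "a v = 0" using a(1) vt by force
    have "e0 = a v *\<^sub>R v + (\<Sum>u\<in>\<tau> - {v}. a u *\<^sub>R u)" using a(2) tp(4) vt by (simp add: sum.remove)
    then have "e0 = (\<Sum>u\<in>\<tau> - {v}. a u *\<^sub>R u)" using av by simp
    then have "e0 \<in> pos_cone (\<tau> - {v})" unfolding pos_cone_def using a(1) by blast
    moreover have "\<tau> - {v} \<in> \<Sigma>Y" using smooth_fan_props(3)[OF sY tp(1)] by blast
    ultimately have "\<tau> \<subseteq> \<tau> - {v}" using tp(3) by blast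
    then show False using vt by blast
  qed
  have e0nz: "w = - (\<Sum>v\<in>\<tau>. a v *\<^sub>R v)" unfolding w_def using a(2) by simp
  have key: "insert w (\<tau> - {v}) \<in> \<Sigma>Y \<and> a v = 1" if vt: "v \<in> \<tau>" for v
  proof -
    obtain T where T: "T \<in> \<Sigma>Y" "- v \<in> pos_cone T" using complete_cover[OF Y] by blast
    have TR: "T \<subseteq> insert w \<tau>" using cone_elem_ray[OF sY T(1)] RY by blast
    have fT: "finite T" "card T \<le> CARD('n)" using fan_card[OF F Y R T(1)] by auto
    have vR: "v \<in> rays \<Sigma>Y" using tp(6) vt by blast
    have wT: "w \<in> T"
    proof (rule ccontr)
      assume "w \<notin> T"
      then have "T \<subseteq> \<tau>" using TR by blast
      then have "- v \<in> pos_cone \<tau>" using pos_cone_mono[OF tp(4)] T(2) by blast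
      moreover have "v \<in> pos_cone \<tau>" using pos_cone_mem[OF tp(4) vt] .
      ultimately have "v = 0" using pos_cone_antisym[OF tp(4,5)] by blast
      then show False using ray_lattice(2)[OF sY vR] by simp
    qed
    obtain \<gamma> where \<gamma>: "\<forall>t\<in>T. \<gamma> t \<ge> 0" "- v = (\<Sum>t\<in>T. \<gamma> t *\<^sub>R t)" using T(2) pos_cone_def by blast
    define g where "g = (\<lambda>u. if u \<in> T then \<gamma> u else 0)"
    have "(\<Sum>t\<in>T. \<gamma> t *\<^sub>R t) = \<gamma> w *\<^sub>R w + (\<Sum>t\<in>T - {w}. \<gamma> t *\<^sub>R t)" using fT(1) wT by (simp add: sum.remove)
    also have "(\<Sum>t\<in>T - {w}. \<gamma> t *\<^sub>R t) = (\<Sum>u\<in>\<tau>. g u *\<^sub>R u)"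
    proof -
      have "(\<Sum>u\<in>\<tau>. g u *\<^sub>R u) = (\<Sum>u\<in>\<tau>. if u \<in> T then \<gamma> u *\<^sub>R u else 0)"
        unfolding g_def by (rule sum.cong) auto
      also have "\<dots> = (\<Sum>u\<in>\<tau> \<inter> T. \<gamma> u *\<^sub>R u)" using tp(4) by (simp add: sum.inter_restrict)
      also have "\<tau> \<inter> T = T - {w}" using TR wY(2) by blast
      finally show ?thesis by simp
    qed
    also have "\<gamma> w *\<^sub>R w = (\<Sum>u\<in>\<tau>. (- (\<gamma> w * a u)) *\<^sub>R u)"
      unfolding e0nz by (simp add: scaleR_sum_right sum_negf)
    finally have "- v = (\<Sum>u\<in>\<tau>. (- (\<gamma> w * a u)) *\<^sub>R u) + (\<Sum>u\<in>\<tau>. g u *\<^sub>R u)" using \<gamma>(2) by simp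
    also have "\<dots> = (\<Sum>u\<in>\<tau>. (- (\<gamma> w * a u) + g u) *\<^sub>R u)" unfolding scaleR_add_left sum.distrib by (rule refl)
    finally have eq1: "(\<Sum>u\<in>\<tau>. (- (\<gamma> w * a u) + g u) *\<^sub>R u) = (\<Sum>u\<in>\<tau>. (if u = v then -1 else 0) *\<^sub>R u)"
    proof -
      assume h: "- v = (\<Sum>u\<in>\<tau>. (- (\<gamma> w * a u) + g u) *\<^sub>R u)"
      have "(\<Sum>u\<in>\<tau>. (if u = v then -1 else 0) *\<^sub>R u) = (\<Sum>u\<in>\<tau>. (if u = v then - u else 0))"
        by (rule sum.cong) auto
      also have "\<dots> = - v" using tp(4) vt by simp
      finally show ?thesis using h by simp
    qed
    have co: "- (\<gamma> w * a u) + g u = (if u = v then -1 else 0)" if "u \<in> \<tau>" for u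
      using coord_unique[OF tp(4,5) eq1 that] .
    have gnn: "g u \<ge> 0" for u unfolding g_def using \<gamma>(1) by simp
    have "g v = \<gamma> w * a v - 1" using co[OF vt] by simp
    then have ga: "\<gamma> w * a v \<ge> 1" using gnn[of v] by simp
    have gw0: "\<gamma> w \<ge> 0" using \<gamma>(1) wT by blast
    have gwpos: "\<gamma> w > 0"
    proof (rule ccontr)
      assume "\<not> \<gamma> w > 0" then have "\<gamma> w = 0" using gw0 by simp
      then show False using ga by simp
    qed
    have sub: "insert w (\<tau> - {v}) \<subseteq> T"
    proof
      fix u assume u: "u \<in> insert w (\<tau> - {v})"
      show "u \<in> T"
      proof (cases "u = w")
        case False
        then have uv: "u \<in> \<tau>" "u \<noteq> v" using u by auto
        have "g u = \<gamma> w * a u" using co[OF uv(1)] uv(2) by simp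
        moreover have "\<gamma> w * a u > 0" using gwpos apos[OF uv(1)] by simp
        ultimately have "g u \<noteq> 0" by linarith
        then show ?thesis unfolding g_def by (cases "u \<in> T") auto
      qed (use wT in simp)
    qed
    have vT: "v \<notin> T"
    proof
      assume "v \<in> T"
      then have "insert w \<tau> \<subseteq> T" using sub vt by blast
      then have "card (insert w \<tau>) \<le> card T" using card_mono[OF fT(1)] by blast
      then show False using fT(2) ct wY(2) tp(4) by simp
    qed
    have Teq: "T = insert w (\<tau> - {v})" using sub TR vT by blast
    have "g v = 0" unfolding g_def using vT by simp
    then have gw1: "\<gamma> w * a v = 1" using co[OF vt] by simp
    have cT: "card T = CARD('n)"
    proof -
      have "card (\<tau> - {v}) = CARD('n) - 1" using ct tp(4) vt by simp
      moreover have "w \<notin> \<tau> - {v}" using wY(2) by blast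
      moreover have "CARD('n) \<ge> 1" by (simp add: Suc_le_eq)
      ultimately show ?thesis unfolding Teq using tp(4) by simp
    qed
    have Tb: "lattice_basis T" using unimodular_card_basis[OF smooth_fan_props(2)[OF sY T(1)] cT] .
    have "- v \<in> lattice_pts" using lattice_uminus[OF ray_lattice(1)[OF sY vR]] .
    then have gwi: "\<gamma> w \<in> \<int>" using lattice_coords_int[OF Tb _ \<gamma>(2) wT] by blast
    have gw1': "\<gamma> w \<ge> 1" using int_gt0[OF gwi gwpos] .
    have av1: "a v \<ge> 1" using int_gt0 aint vt apos[OF vt] by blast
    have "a v \<le> \<gamma> w * a v" using gw1' av1 by (simp add: mult_le_cancel_right1)
    then have "a v = 1" using av1 gw1 by simp
    then show ?thesis using T(1) Teq by simp
  qed
  have "e0 = (\<Sum>v\<in>\<tau>. v)" using a(2) key by simp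
  then have wsum: "w = - (\<Sum>\<tau>)" unfolding w_def by simp
  show ?thesis unfolding is_Pn_fan_def
  proof (intro exI conjI)
    show "lattice_basis \<tau>" using tb .
    show "\<Sigma>Y = {S. S \<subseteq> insert (- (\<Sum>\<tau>)) \<tau> \<and> S \<noteq> insert (- (\<Sum>\<tau>)) \<tau>}"
      unfolding wsum[symmetric]
    proof
      show "\<Sigma>Y \<subseteq> {S. S \<subseteq> insert w \<tau> \<and> S \<noteq> insert w \<tau>}"
      proof
        fix S assume S: "S \<in> \<Sigma>Y"
        have "S \<subseteq> insert w \<tau>" using cone_elem_ray[OF sY S] RY by blast
        moreover have "S \<noteq> insert w \<tau>"
        proof
          assume "S = insert w \<tau>"
          then show False using insert_not_fan[OF F Y R tp(4) ct wY(2)] S by simp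
        qed
        ultimately show "S \<in> {S. S \<subseteq> insert w \<tau> \<and> S \<noteq> insert w \<tau>}" by blast
      qed
      show "{S. S \<subseteq> insert w \<tau> \<and> S \<noteq> insert w \<tau>} \<subseteq> \<Sigma>Y"
      proof
        fix S assume "S \<in> {S. S \<subseteq> insert w \<tau> \<and> S \<noteq> insert w \<tau>}"
        then have S: "S \<subseteq> insert w \<tau>" "S \<noteq> insert w \<tau>" by auto
        show "S \<in> \<Sigma>Y"
        proof (cases "w \<in> S")
          case False
          then have "S \<subseteq> \<tau>" using S(1) by blast
          then show ?thesis using smooth_fan_props(3)[OF sY tp(1)] by blast
        next
          case True
          then obtain v where v: "v \<in> \<tau>" "v \<notin> S" using S by blast
          then have "S \<subseteq> insert w (\<tau> - {v})" using S(1) by blast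
          then show ?thesis using smooth_fan_props(3)[OF sY] key[OF v(1)] by blast
        qed
      qed
    qed
  qed
qed

end

theorem corollary4p2:
  fixes \<Sigma>X \<Sigma>Y :: "(real^'n) set set"
  assumes "toric_fano \<Sigma>X"
    and "smooth_complete_fan \<Sigma>Y"
    and "refines \<Sigma>X \<Sigma>Y"
  shows "\<forall>e\<in>rays \<Sigma>X. \<forall>\<tau>. image_cone \<Sigma>Y e \<tau> \<longrightarrow>
           picard_number \<Sigma>Y - orbit_picard_number \<Sigma>Y \<tau> \<le> 3 \<and>
           (card \<tau> = CARD('n) \<longrightarrow>
              picard_number \<Sigma>Y \<le> 3 \<and>
              (\<not> is_Pn_fan \<Sigma>Y \<longrightarrow> exceptional_over \<Sigma>X \<Sigma>Y \<tau> \<subseteq> {e}) \<and>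
              (is_Pn_fan \<Sigma>Y \<longrightarrow> card (exceptional_over \<Sigma>X \<Sigma>Y \<tau> - {e}) \<le> 1))"
proof (intro ballI allI impI)
  note F = assms(1) and Y = assms(2) and R = assms(3)
  note sY = sfY[OF F Y R]
  fix e \<tau> assume e: "e \<in> rays \<Sigma>X" and img: "image_cone \<Sigma>Y e \<tau>"
  note tp = img_props[OF F Y R img]
  define A where "A = {v \<in> rays \<Sigma>Y. v \<notin> \<tau> \<and> insert v \<tau> \<in> \<Sigma>Y}"
  define W where "W = {v \<in> rays \<Sigma>Y. v \<notin> \<tau> \<and> insert v \<tau> \<notin> \<Sigma>Y}"
  have finR: "finite (rays \<Sigma>Y)" using rays_finite[OF sY] .
  have RY: "rays \<Sigma>Y = \<tau> \<union> (A \<union> W)" unfolding A_def W_def using tp(6) by blast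
  have fA: "finite A" "finite W" unfolding A_def W_def using finR by auto
  have "card (rays \<Sigma>Y) = card \<tau> + card (A \<union> W)"
    unfolding RY by (rule card_Un_disjoint) (use tp(4) fA in \<open>auto simp: A_def W_def\<close>)
  moreover have "card (A \<union> W) = card A + card W"
    by (rule card_Un_disjoint) (use fA in \<open>auto simp: A_def W_def\<close>)
  ultimately have cR: "card (rays \<Sigma>Y) = card \<tau> + card A + card W" by simp
  have diff: "picard_number \<Sigma>Y - orbit_picard_number \<Sigma>Y \<tau> = int (card W)"
    unfolding picard_number_def orbit_picard_number_def A_def[symmetric] using cR by simp
  have WN: "W \<subseteq> nonadj \<Sigma>X e" unfolding W_def nonadj_def using W_nonadj[OF F Y R e img] by blast
  have finN: "finite (nonadj \<Sigma>X e)" using rays_finite[OF sf[OF F]] unfolding nonadj_def by simp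
  have "card W \<le> card (nonadj \<Sigma>X e)" using card_mono[OF finN WN] .
  also have "\<dots> \<le> 3" using nonadj_card[OF F e] .
  finally have cW: "card W \<le> 3" .
  have P1: "picard_number \<Sigma>Y - orbit_picard_number \<Sigma>Y \<tau> \<le> 3" using diff cW by simp
  have P2: "card \<tau> = CARD('n) \<longrightarrow>
              picard_number \<Sigma>Y \<le> 3 \<and>
              (\<not> is_Pn_fan \<Sigma>Y \<longrightarrow> exceptional_over \<Sigma>X \<Sigma>Y \<tau> \<subseteq> {e}) \<and>
              (is_Pn_fan \<Sigma>Y \<longrightarrow> card (exceptional_over \<Sigma>X \<Sigma>Y \<tau> - {e}) \<le> 1)"
  proof
  assume ct: "card \<tau> = CARD('n)"
  have "A = {}" unfolding A_def using insert_not_fan[OF F Y R tp(4) ct] by blast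
  then have "orbit_picard_number \<Sigma>Y \<tau> = 0" unfolding orbit_picard_number_def A_def[symmetric] using ct by simp
  then have Q1: "picard_number \<Sigma>Y \<le> 3" using diff cW by simp
  have exc: "e' \<in> rays \<Sigma>X \<and> image_cone \<Sigma>Y e' \<tau>" if "e' \<in> exceptional_over \<Sigma>X \<Sigma>Y \<tau>" for e'
    using that unfolding exceptional_over_def by blast
  obtain w0 where w0: "w0 \<in> rays \<Sigma>Y" "w0 \<notin> \<tau>" "insert w0 \<tau> \<notin> \<Sigma>Y" using W_nonempty[OF F Y R e img ct] by blast
  have Q2: "\<not> is_Pn_fan \<Sigma>Y \<longrightarrow> exceptional_over \<Sigma>X \<Sigma>Y \<tau> \<subseteq> {e}"
  proof (intro impI subsetI)
    fix e' assume nP: "\<not> is_Pn_fan \<Sigma>Y" and e'x: "e' \<in> exceptional_over \<Sigma>X \<Sigma>Y \<tau>"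
    have e': "e' \<in> rays \<Sigma>X" "image_cone \<Sigma>Y e' \<tau>" using exc[OF e'x] by auto
    show "e' \<in> {e}"
    proof (rule ccontr)
      assume "e' \<notin> {e}" then have ne: "e \<noteq> e'" by simp
      have K: "w = - e \<or> w = - e'" if "w \<in> rays \<Sigma>Y" "w \<notin> \<tau>" "insert w \<tau> \<notin> \<Sigma>Y" for w
        using K1[OF F Y R e img e' ct ne that] .
      have notboth: False if "- e \<in> rays \<Sigma>Y" "- e \<notin> \<tau>" "insert (- e) \<tau> \<notin> \<Sigma>Y"
          "- e' \<in> rays \<Sigma>Y" "- e' \<notin> \<tau>" "insert (- e') \<tau> \<notin> \<Sigma>Y"
        using K2[OF F Y R e img e' ct ne that] .
      have "is_Pn_fan \<Sigma>Y"
      proof (cases "w0 = - e")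
        case True
        have "(w \<in> rays \<Sigma>Y \<and> w \<notin> \<tau> \<and> insert w \<tau> \<notin> \<Sigma>Y) \<longleftrightarrow> w = - e" for w
          using K notboth w0 True by blast
        then show ?thesis using PN[OF F Y R e img ct] by blast
      next
        case False
        then have w0e': "w0 = - e'" using K w0 by blast
        have "(w \<in> rays \<Sigma>Y \<and> w \<notin> \<tau> \<and> insert w \<tau> \<notin> \<Sigma>Y) \<longleftrightarrow> w = - e'" for w
          using K notboth w0 w0e' by blast
        then show ?thesis using PN[OF F Y R e'(1) e'(2) ct] by blast
      qed
      then show False using nP by simp
    qed
  qed
  have Q3: "is_Pn_fan \<Sigma>Y \<longrightarrow> card (exceptional_over \<Sigma>X \<Sigma>Y \<tau> - {e}) \<le> 1"
  proof
    have finE: "finite (exceptional_over \<Sigma>X \<Sigma>Y \<tau> - {e})"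
      using rays_finite[OF sf[OF F]] unfolding exceptional_over_def by simp
    show "card (exceptional_over \<Sigma>X \<Sigma>Y \<tau> - {e}) \<le> 1"
    proof (rule card_le1[OF finE])
      fix a b assume a: "a \<in> exceptional_over \<Sigma>X \<Sigma>Y \<tau> - {e}" and b: "b \<in> exceptional_over \<Sigma>X \<Sigma>Y \<tau> - {e}"
      show "a = b"
      proof (rule ccontr)
        assume ab: "a \<noteq> b"
        have ea: "e \<noteq> a" "e \<noteq> b" using a b by auto
        note ax = exc[of a] and bx = exc[of b]
        have a': "a \<in> rays \<Sigma>X" "image_cone \<Sigma>Y a \<tau>" using a exc by auto
        have b': "b \<in> rays \<Sigma>X" "image_cone \<Sigma>Y b \<tau>" using b exc by auto
        have k1: "w0 = - e \<or> w0 = - a" using K1[OF F Y R e img a' ct ea(1) w0] .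
        have k2: "w0 = - e \<or> w0 = - b" using K1[OF F Y R e img b' ct ea(2) w0] .
        have k3: "w0 = - a \<or> w0 = - b" using K1[OF F Y R a' b' ct ab w0] .
        from k1 k2 k3 ea ab show False by (metis minus_equation_iff)
      qed
    qed
  qed
  show "picard_number \<Sigma>Y \<le> 3 \<and>
              (\<not> is_Pn_fan \<Sigma>Y \<longrightarrow> exceptional_over \<Sigma>X \<Sigma>Y \<tau> \<subseteq> {e}) \<and>
              (is_Pn_fan \<Sigma>Y \<longrightarrow> card (exceptional_over \<Sigma>X \<Sigma>Y \<tau> - {e}) \<le> 1)"
    using Q1 Q2 Q3 by blast
  qed
  show "picard_number \<Sigma>Y - orbit_picard_number \<Sigma>Y \<tau> \<le> 3 \<and>
           (card \<tau> = CARD('n) \<longrightarrow>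
              picard_number \<Sigma>Y \<le> 3 \<and>
              (\<not> is_Pn_fan \<Sigma>Y \<longrightarrow> exceptional_over \<Sigma>X \<Sigma>Y \<tau> \<subseteq> {e}) \<and>
              (is_Pn_fan \<Sigma>Y \<longrightarrow> card (exceptional_over \<Sigma>X \<Sigma>Y \<tau> - {e}) \<le> 1))"
    using P1 P2 by blast
qed

end
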